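(* Let $T=\{(x,y)\in\mathbb{R}^2:x+y>0\}$ and let $M\colon T\to\mathbf{Vec}$ be pointwise finite-dimensional, middle exact and indecomposable. If there exist $x\le x'$, $y\le y'$ with $a=(x,y)$, $b=(x,y')$, $c=(x',y)$, $d=(x',y')$ all in $T$ such that $M_b\oplus M_c\xrightarrow{M(b\le d)-M(c\le d)}M_d$ is not surjective, then $M\cong k_{J\cap T}$ for some block $J\subseteq\mathbb{R}^2$ of type bb.
   Context: $T$ has the product order from $\mathbb{R}^2$. Middle exact on $T$: for all such $a,b,c,d\in T$ the sequence $M_a\xrightarrow{(M(a\le b),M(a\le c))}M_b\oplus M_c\xrightarrow{M(b\le d)-M(c\le d)}M_d$ is exact at the middle. A block of type bb in $\mathbb{R}^2$ is $J_1\times J_2$ with $J_1,J_2\subseteq\mathbb{R}$ non-empty upward-closed. $k_B$ is $k$ on $B$, $0$ elsewhere, identity maps within $B$ and zero otherwise. *)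

theory Defs
  imports Complex_Main "HOL-Library.Product_Order"
begin

text \<open>All spaces M_t are subspaces V t of one ambient
  'k-vector space of type 'v (with scalar multiplication sc); the structure map M(s \<le> t)
  is F s t restricted to V s.  The order on real \<times> real is the product order
  (HOL-Library.Product_Order).\<close>

definition lin_on :: "('k::field \<Rightarrow> 'v::ab_group_add \<Rightarrow> 'v) \<Rightarrow> ('k \<Rightarrow> 'w::ab_group_add \<Rightarrow> 'w)
    \<Rightarrow> 'v set \<Rightarrow> ('v \<Rightarrow> 'w) \<Rightarrow> bool" where
  "lin_on sc1 sc2 A f \<longleftrightarrow>
     (\<forall>x\<in>A. \<forall>y\<in>A. f (x + y) = f x + f y) \<and> (\<forall>c. \<forall>x\<in>A. f (sc1 c x) = sc2 c (f x))"

definition pmod :: "('k::field \<Rightarrow> 'v::ab_group_add \<Rightarrow> 'v) \<Rightarrow> ('a::order) set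
    \<Rightarrow> ('a \<Rightarrow> 'v set) \<Rightarrow> ('a \<Rightarrow> 'a \<Rightarrow> 'v \<Rightarrow> 'v) \<Rightarrow> bool" where
  "pmod sc T V F \<longleftrightarrow>
     vector_space sc \<and>
     (\<forall>t\<in>T. module.subspace sc (V t)) \<and>
     (\<forall>s\<in>T. \<forall>t\<in>T. s \<le> t \<longrightarrow> (\<forall>x\<in>V s. F s t x \<in> V t) \<and> lin_on sc sc (V s) (F s t)) \<and>
     (\<forall>t\<in>T. \<forall>x\<in>V t. F t t x = x) \<and>
     (\<forall>r\<in>T. \<forall>s\<in>T. \<forall>t\<in>T. r \<le> s \<longrightarrow> s \<le> t \<longrightarrow> (\<forall>x\<in>V r. F s t (F r s x) = F r t x))"

definition pfd :: "('k::field \<Rightarrow> 'v::ab_group_add \<Rightarrow> 'v) \<Rightarrow> 'a set \<Rightarrow> ('a \<Rightarrow> 'v set) \<Rightarrow> bool" where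
  "pfd sc T V \<longleftrightarrow> (\<forall>t\<in>T. \<exists>B. finite B \<and> B \<subseteq> V t \<and> module.span sc B = V t)"

definition middle_exact :: "(real \<times> real) set \<Rightarrow> (real \<times> real \<Rightarrow> 'v::ab_group_add set)
    \<Rightarrow> (real \<times> real \<Rightarrow> real \<times> real \<Rightarrow> 'v \<Rightarrow> 'v) \<Rightarrow> bool" where
  "middle_exact T V F \<longleftrightarrow>
     (\<forall>x x' y y'. x \<le> x' \<longrightarrow> y \<le> y' \<longrightarrow>
        (x, y) \<in> T \<longrightarrow> (x, y') \<in> T \<longrightarrow> (x', y) \<in> T \<longrightarrow> (x', y') \<in> T \<longrightarrow>
        (let a = (x, y); b = (x, y'); c = (x', y); d = (x', y') in
          (\<lambda>v. (F a b v, F a c v)) ` V a =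
          {(u, w). u \<in> V b \<and> w \<in> V c \<and> F b d u - F c d w = 0}))"

definition indecomposable :: "('k::field \<Rightarrow> 'v::ab_group_add \<Rightarrow> 'v) \<Rightarrow> 'a::order set
    \<Rightarrow> ('a \<Rightarrow> 'v set) \<Rightarrow> ('a \<Rightarrow> 'a \<Rightarrow> 'v \<Rightarrow> 'v) \<Rightarrow> bool" where
  "indecomposable sc T V F \<longleftrightarrow>
     (\<exists>t\<in>T. V t \<noteq> {0}) \<and>
     (\<forall>U W. (\<forall>t\<in>T. module.subspace sc (U t) \<and> module.subspace sc (W t) \<and>
                U t \<inter> W t = {0} \<and> {u + w | u w. u \<in> U t \<and> w \<in> W t} = V t) \<and>
            (\<forall>s\<in>T. \<forall>t\<in>T. s \<le> t \<longrightarrow> (\<forall>x\<in>U s. F s t x \<in> U t) \<and> (\<forall>x\<in>W s. F s t x \<in> W t))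
        \<longrightarrow> (\<forall>t\<in>T. U t = {0}) \<or> (\<forall>t\<in>T. W t = {0}))"

definition pmod_iso :: "('k::field \<Rightarrow> 'v::ab_group_add \<Rightarrow> 'v) \<Rightarrow> 'a::order set
    \<Rightarrow> ('a \<Rightarrow> 'v set) \<Rightarrow> ('a \<Rightarrow> 'a \<Rightarrow> 'v \<Rightarrow> 'v)
    \<Rightarrow> ('k \<Rightarrow> 'w::ab_group_add \<Rightarrow> 'w) \<Rightarrow> ('a \<Rightarrow> 'w set) \<Rightarrow> ('a \<Rightarrow> 'a \<Rightarrow> 'w \<Rightarrow> 'w) \<Rightarrow> bool" where
  "pmod_iso sc1 T V1 F1 sc2 V2 F2 \<longleftrightarrow>
     (\<exists>\<phi>. (\<forall>t\<in>T. lin_on sc1 sc2 (V1 t) (\<phi> t) \<and> bij_betw (\<phi> t) (V1 t) (V2 t)) \<and>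
          (\<forall>s\<in>T. \<forall>t\<in>T. s \<le> t \<longrightarrow> (\<forall>x\<in>V1 s. \<phi> t (F1 s t x) = F2 s t (\<phi> s x))))"

definition kB_space :: "'a set \<Rightarrow> 'a \<Rightarrow> 'k::field set" where
  "kB_space B t = (if t \<in> B then UNIV else {0})"

definition kB_map :: "'a set \<Rightarrow> 'a \<Rightarrow> 'a \<Rightarrow> 'k::field \<Rightarrow> 'k" where
  "kB_map B s t x = (if s \<in> B \<and> t \<in> B then x else 0)"

definition upclosed :: "real set \<Rightarrow> bool" where
  "upclosed J \<longleftrightarrow> (\<forall>x\<in>J. \<forall>y. x \<le> y \<longrightarrow> y \<in> J)"

definition block_bb :: "(real \<times> real) set \<Rightarrow> bool" where
  "block_bb J \<longleftrightarrow> (\<exists>J1 J2. J1 \<noteq> {} \<and> J2 \<noteq> {} \<and> upclosed J1 \<and> upclosed J2 \<and> J = J1 \<times> J2)"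

end

theory Submission
  imports Defs
begin
lemma vs_mult: "vector_space ((*) :: 'k::field \<Rightarrow> 'k \<Rightarrow> 'k)"
  by unfold_locales (auto simp: algebra_simps)

context vector_space begin

lemma card_indep_le:
  assumes "subspace S'" "S' \<subseteq> span W" "finite W" "independent C" "C \<subseteq> S'"
  shows "finite C \<and> card C \<le> dim S'"
proof -
  obtain B where B: "B \<subseteq> S'" "independent B" "S' \<subseteq> span B" "card B = dim S'"
    using basis_exists by blast
  have fB: "finite B" using independent_span_bound[OF assms(3) B(2)] B(1) assms(2) by auto
  have "C \<subseteq> span B" using assms(5) B(3) by auto
  from independent_span_bound[OF fB assms(4) this] B(4) show ?thesis by simp
qed

lemma dim_mono':
  assumes "subspace S'" "S' \<subseteq> span W" "finite W" "S \<subseteq> S'"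
  shows "dim S \<le> dim S'"
proof -
  obtain B where B: "B \<subseteq> S" "independent B" "S \<subseteq> span B" "card B = dim S"
    using basis_exists by blast
  show ?thesis using card_indep_le[OF assms(1-3) B(2)] B assms(4) by auto
qed

lemma dim_eq_sub:
  assumes "subspace S" "subspace S'" "S \<subseteq> S'" "S' \<subseteq> span W" "finite W" "dim S' \<le> dim S"
  shows "S = S'"
proof (rule ccontr)
  assume "S \<noteq> S'"
  then obtain v where v: "v \<in> S'" "v \<notin> S" using assms(3) by auto
  obtain B where B: "B \<subseteq> S" "independent B" "S \<subseteq> span B" "card B = dim S"
    using basis_exists by blast
  have "span B \<subseteq> S" using span_minimal[OF B(1) assms(1)] .
  hence "v \<notin> span B" using v by auto
  hence ind: "independent (insert v B)" using independent_insertI B(2) by blast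
  have sub: "insert v B \<subseteq> S'" using B(1) assms(3) v by auto
  from card_indep_le[OF assms(2,4,5) ind sub] have "finite (insert v B)" "card (insert v B) \<le> dim S'" by auto
  moreover have "card (insert v B) = card B + 1" using \<open>v \<notin> span B\<close> span_superset[of B] calculation(1)
    by (subst card_insert_disjoint) auto
  ultimately show False using B(4) assms(6) by simp
qed

lemma separate:
  assumes "subspace N" "z \<notin> N"
  shows "\<exists>f::'b\<Rightarrow>'a. (\<forall>a b. f (a + b) = f a + f b) \<and> (\<forall>c a. f (c *s a) = c * f a) \<and> f z = 1 \<and> (\<forall>a\<in>N. f a = 0)"
proof -
  interpret p: vector_space_pair scale "(*) :: 'a \<Rightarrow> 'a \<Rightarrow> 'a"
    by unfold_locales (auto simp: algebra_simps)
  obtain B where B: "B \<subseteq> N" "independent B" "N \<subseteq> span B"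
    using maximal_independent_subset by blast
  have "span B \<subseteq> N" using span_minimal[OF B(1) assms(1)] .
  hence "z \<notin> span B" using assms by auto
  hence ind: "independent (insert z B)" using independent_insertI B(2) by blast
  obtain f where f: "Vector_Spaces.linear scale (*) f" "\<forall>v\<in>insert z B. f v = (if v = z then 1 else 0)"
    using p.linear_independent_extend[OF ind, of "\<lambda>v. if v = z then 1 else 0"] by blast
  have lin: "\<forall>a b. f (a + b) = f a + f b" "\<forall>c a. f (c *s a) = c * f a"
    using f(1) unfolding Vector_Spaces.linear_iff by auto
  have "subspace {a. f a = 0}"
  proof (rule subspaceI)
    have "f 0 = f (0 *s 0)" by simp
    also have "\<dots> = 0" using lin(2)[rule_format, of 0 0] by simp
    finally show "0 \<in> {a. f a = 0}" by simp
  qed (use lin in auto)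
  moreover have "B \<subseteq> {a. f a = 0}" using f(2) \<open>z \<notin> span B\<close> span_superset by fastforce
  ultimately have "span B \<subseteq> {a. f a = 0}" by (rule span_minimal[rotated])
  hence "\<forall>a\<in>N. f a = 0" using B(3) by auto
  thus ?thesis using lin f(2) by (intro exI[of _ f]) auto
qed

lemma extend_fun:
  assumes "subspace S" "\<forall>a\<in>S. \<forall>b\<in>S. g (a + b) = g a + g b" "\<forall>c. \<forall>a\<in>S. g (c *s a) = (c::'a) * g a"
  shows "\<exists>f::'b\<Rightarrow>'a. (\<forall>a b. f (a + b) = f a + f b) \<and> (\<forall>c a. f (c *s a) = c * f a) \<and> (\<forall>a\<in>S. f a = g a)"
proof -
  interpret p: vector_space_pair scale "(*) :: 'a \<Rightarrow> 'a \<Rightarrow> 'a"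
    by unfold_locales (auto simp: algebra_simps)
  obtain B where B: "B \<subseteq> S" "independent B" "S \<subseteq> span B"
    using maximal_independent_subset by blast
  obtain f where f: "Vector_Spaces.linear scale (*) f" "\<forall>v\<in>B. f v = g v"
    using p.linear_independent_extend[OF B(2)] by blast
  have lin: "\<forall>a b. f (a + b) = f a + f b" "\<forall>c a. f (c *s a) = c * f a"
    using f(1) unfolding Vector_Spaces.linear_iff by auto
  have f0: "f 0 = 0" using lin(2)[rule_format, of 0 0] by simp
  have g0: "g 0 = 0" using assms(3) subspace_0[OF assms(1)] by (metis scale_zero_left mult_zero_left)
  have sub: "subspace {a\<in>S. f a = g a}"
  proof (rule subspaceI)
    show "0 \<in> {a\<in>S. f a = g a}" using f0 g0 subspace_0[OF assms(1)] by simp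
  next
    fix a b assume "a \<in> {a\<in>S. f a = g a}" "b \<in> {a\<in>S. f a = g a}"
    thus "a + b \<in> {a\<in>S. f a = g a}" using assms(2) lin(1) subspace_add[OF assms(1)] by simp
  next
    fix c a assume "a \<in> {a\<in>S. f a = g a}"
    thus "c *s a \<in> {a\<in>S. f a = g a}" using assms(3) lin(2) subspace_scale[OF assms(1)] by simp
  qed
  have "B \<subseteq> {a\<in>S. f a = g a}" using f(2) B(1) by auto
  hence "span B \<subseteq> {a\<in>S. f a = g a}" using span_minimal sub by blast
  hence "\<forall>a\<in>S. f a = g a" using B(3) by blast
  thus ?thesis using lin by (intro exI[of _ f]) blast
qed


lemma qext:
  assumes V0: "subspace V0" and N: "subspace N"
    and Ga: "\<forall>m\<in>V0. \<forall>n\<in>V0. G (m + n) = G m + G n" and Gs: "\<forall>c. \<forall>m\<in>V0. G (c *s m) = c *s G m"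
    and fa: "\<forall>m\<in>V0. \<forall>n\<in>V0. f (m + n) = f m + f n" and fs: "\<forall>c. \<forall>m\<in>V0. f (c *s m) = (c::'a) * f m"
    and fk: "\<forall>m\<in>V0. G m \<in> N \<longrightarrow> f m = 0"
  shows "\<exists>f'::'b\<Rightarrow>'a. (\<forall>a b. f' (a + b) = f' a + f' b) \<and> (\<forall>c a. f' (c *s a) = c * f' a)
      \<and> (\<forall>m\<in>V0. f' (G m) = f m) \<and> (\<forall>n\<in>N. f' n = 0)"
proof -
  have G0: "G 0 = 0"
  proof -
    have "G (0 *s 0) = 0 *s G 0" using Gs subspace_0[OF V0] by blast
    thus ?thesis by simp
  qed
  have f0: "f 0 = 0"
  proof -
    have "f (0 *s 0) = 0 * f 0" using fs subspace_0[OF V0] by blast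
    thus ?thesis by simp
  qed
  have Gd: "G (m - m') = G m - G m'" if "m \<in> V0" "m' \<in> V0" for m m'
  proof -
    have "G ((m - m') + m') = G (m - m') + G m'" using Ga subspace_diff[OF V0 that] that by blast
    thus ?thesis by (simp add: algebra_simps)
  qed
  have fd: "f (m - m') = f m - f m'" if "m \<in> V0" "m' \<in> V0" for m m'
  proof -
    have "f ((m - m') + m') = f (m - m') + f m'" using fa subspace_diff[OF V0 that] that by blast
    thus ?thesis by (simp add: algebra_simps)
  qed
  have key: "f m = f m'" if "m \<in> V0" "m' \<in> V0" "n \<in> N" "n' \<in> N" "G m + n = G m' + n'" for m m' n n'
  proof -
    have "G m - G m' = n' - n" using that(5) by (simp add: algebra_simps eq_diff_eq diff_eq_eq)
    hence "G (m - m') = n' - n" using that Gd by simp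
    hence "G (m - m') \<in> N" using subspace_diff[OF N] that by simp
    hence "f (m - m') = 0" using fk subspace_diff[OF V0] that by blast
    thus ?thesis using fd that by simp
  qed
  define S where "S = {G m + n | m n. m \<in> V0 \<and> n \<in> N}"
  define g where "g v = f (SOME m. m \<in> V0 \<and> (\<exists>n\<in>N. v = G m + n))" for v
  have gval: "g (G m + n) = f m" if "m \<in> V0" "n \<in> N" for m n
  proof -
    have ex: "\<exists>m'. m' \<in> V0 \<and> (\<exists>n'\<in>N. G m + n = G m' + n')" using that by blast
    define m0 where "m0 = (SOME m'. m' \<in> V0 \<and> (\<exists>n'\<in>N. G m + n = G m' + n'))"
    have "m0 \<in> V0 \<and> (\<exists>n'\<in>N. G m + n = G m0 + n')" unfolding m0_def using someI_ex[OF ex] .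
    then obtain n' where n': "m0 \<in> V0" "n' \<in> N" "G m + n = G m0 + n'" by blast
    have "g (G m + n) = f m0" unfolding g_def m0_def by simp
    thus ?thesis using key[OF that(1) n'(1) that(2) n'(2,3)] by simp
  qed
  have Ssub: "subspace S"
  proof (rule subspaceI)
    show "0 \<in> S" unfolding S_def using G0 subspace_0[OF V0] subspace_0[OF N] by force
  next
    fix u v assume "u \<in> S" "v \<in> S"
    then obtain m n m' n' where "m \<in> V0" "n \<in> N" "m' \<in> V0" "n' \<in> N" "u = G m + n" "v = G m' + n'"
      unfolding S_def by blast
    thus "u + v \<in> S" unfolding S_def using Ga subspace_add[OF V0] subspace_add[OF N]
      by (intro CollectI exI[of _ "m + m'"] exI[of _ "n + n'"]) (auto simp: algebra_simps)
  next
    fix c u assume "u \<in> S"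
    then obtain m n where "m \<in> V0" "n \<in> N" "u = G m + n" unfolding S_def by blast
    thus "c *s u \<in> S" unfolding S_def using Gs subspace_scale[OF V0] subspace_scale[OF N]
      by (intro CollectI exI[of _ "c *s m"] exI[of _ "c *s n"]) (auto simp: algebra_simps)
  qed
  have gadd: "\<forall>u\<in>S. \<forall>v\<in>S. g (u + v) = g u + g v"
  proof (intro ballI)
    fix u v assume "u \<in> S" "v \<in> S"
    then obtain m n m' n' where h: "m \<in> V0" "n \<in> N" "m' \<in> V0" "n' \<in> N" "u = G m + n" "v = G m' + n'"
      unfolding S_def by blast
    have e: "u + v = G (m + m') + (n + n')" using h Ga by (simp add: algebra_simps)
    have "g (u + v) = f (m + m')" unfolding e using gval[OF subspace_add[OF V0 h(1,3)] subspace_add[OF N h(2,4)]] .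
    moreover have "g u = f m" "g v = f m'" using gval h by simp_all
    ultimately show "g (u + v) = g u + g v" using fa h by simp
  qed
  have gsc: "\<forall>c. \<forall>u\<in>S. g (c *s u) = c * g u"
  proof (intro allI ballI)
    fix c u assume "u \<in> S"
    then obtain m n where h: "m \<in> V0" "n \<in> N" "u = G m + n" unfolding S_def by blast
    have e: "c *s u = G (c *s m) + c *s n" using h Gs by (simp add: scale_right_distrib)
    have "g (c *s u) = f (c *s m)" unfolding e using gval[OF subspace_scale[OF V0 h(1)] subspace_scale[OF N h(2)]] .
    moreover have "g u = f m" using gval h by simp
    ultimately show "g (c *s u) = c * g u" using fs h by simp
  qed
  obtain f' where f': "\<forall>a b. f' (a + b) = f' a + f' b" "\<forall>c a. f' (c *s a) = c * f' a" "\<forall>a\<in>S. f' a = g a"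
    using extend_fun[OF Ssub gadd gsc] by blast
  have "\<forall>m\<in>V0. f' (G m) = f m"
  proof
    fix m assume "m \<in> V0"
    hence "G m + 0 \<in> S" unfolding S_def using subspace_0[OF N] by blast
    thus "f' (G m) = f m" using f'(3) gval[OF \<open>m \<in> V0\<close> subspace_0[OF N]] by simp
  qed
  moreover have "\<forall>n\<in>N. f' n = 0"
  proof
    fix n assume "n \<in> N"
    hence "G 0 + n \<in> S" unfolding S_def using subspace_0[OF V0] by blast
    thus "f' n = 0" using f'(3) gval[OF subspace_0[OF V0] \<open>n \<in> N\<close>] G0 f0 by simp
  qed
  ultimately show ?thesis using f' by blast
qed

end

lemma mittag_thread:
  fixes X :: "nat \<Rightarrow> 'a set" and h :: "nat \<Rightarrow> nat \<Rightarrow> 'a \<Rightarrow> 'a"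
  assumes maps: "\<And>n k x. n \<le> k \<Longrightarrow> x \<in> X k \<Longrightarrow> h n k x \<in> X n"
    and comp: "\<And>n k l x. n \<le> k \<Longrightarrow> k \<le> l \<Longrightarrow> x \<in> X l \<Longrightarrow> h n k (h k l x) = h n l x"
    and ne: "\<And>n. X n \<noteq> {}"
    and stab: "\<And>n. \<exists>k0\<ge>n. \<forall>k\<ge>k0. h n k ` X k = h n k0 ` X k0"
  shows "\<exists>sel. \<forall>n. sel n \<in> X n \<and> h n (Suc n) (sel (Suc n)) = sel n"
proof -
  have "\<forall>n. \<exists>k0. k0 \<ge> n \<and> (\<forall>k\<ge>k0. h n k ` X k = h n k0 ` X k0)" using stab by blast
  from choice[OF this] obtain K where K0: "\<forall>n. K n \<ge> n \<and> (\<forall>k\<ge>K n. h n k ` X k = h n (K n) ` X (K n))"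
    by blast
  have K: "\<And>n. K n \<ge> n" "\<And>n k. k \<ge> K n \<Longrightarrow> h n k ` X k = h n (K n) ` X (K n)"
    using K0 by blast+
  define Y where "Y n = h n (K n) ` X (K n)" for n
  have YX: "Y n \<subseteq> X n" for n unfolding Y_def using maps K(1) by blast
  have Yne: "Y n \<noteq> {}" for n unfolding Y_def using ne by blast
  have lift: "\<exists>y'\<in>Y (Suc n). h n (Suc n) y' = y" if "y \<in> Y n" for n y
  proof -
    define L where "L = max (K n) (K (Suc n))"
    have L: "L \<ge> K n" "L \<ge> K (Suc n)" "Suc n \<le> L" using K(1)[of "Suc n"] unfolding L_def by auto
    have "y \<in> h n L ` X L" using that K(2)[OF L(1)] unfolding Y_def by simp
    then obtain x where x: "x \<in> X L" "y = h n L x" by blast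
    have "h (Suc n) L x \<in> Y (Suc n)" using K(2)[OF L(2)] x(1) unfolding Y_def by blast
    moreover have "h n (Suc n) (h (Suc n) L x) = y" using comp[of n "Suc n" L x] L x by simp
    ultimately show ?thesis by blast
  qed
  define sel where "sel = rec_nat (SOME y. y \<in> Y 0) (\<lambda>n s. SOME y'. y' \<in> Y (Suc n) \<and> h n (Suc n) y' = s)"
  have s0: "sel 0 = (SOME y. y \<in> Y 0)" unfolding sel_def by simp
  have sS: "sel (Suc n) = (SOME y'. y' \<in> Y (Suc n) \<and> h n (Suc n) y' = sel n)" for n unfolding sel_def by simp
  have inY: "sel n \<in> Y n" for n
  proof (induction n)
    case 0
    from Yne[of 0] have "\<exists>y. y \<in> Y 0" by blast
    from someI_ex[OF this] show ?case using s0 by simp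
  next
    case (Suc n)
    from lift[OF Suc] have "\<exists>y'. y' \<in> Y (Suc n) \<and> h n (Suc n) y' = sel n" by blast
    from someI_ex[OF this] show ?case using sS by simp
  qed
  have "h n (Suc n) (sel (Suc n)) = sel n" for n
  proof -
    from lift[OF inY[of n]] have "\<exists>y'. y' \<in> Y (Suc n) \<and> h n (Suc n) y' = sel n" by blast
    from someI_ex[OF this] show ?thesis using sS by simp
  qed
  thus ?thesis using inY YX by blast
qed

lemma mittag_chain:
  fixes sel :: "nat \<Rightarrow> 'a"
  assumes comp: "\<And>n k l x. n \<le> k \<Longrightarrow> k \<le> l \<Longrightarrow> x \<in> X l \<Longrightarrow> h n k (h k l x) = h n l x"
    and refl: "\<And>n x. x \<in> X n \<Longrightarrow> h n n x = x"
    and sel: "\<forall>n. sel n \<in> X n \<and> h n (Suc n) (sel (Suc n)) = sel n"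
  shows "n \<le> k \<Longrightarrow> h n k (sel k) = sel n"
proof (induction k)
  case 0 thus ?case using refl sel by auto
next
  case (Suc k)
  show ?case
  proof (cases "n = Suc k")
    case True thus ?thesis using refl sel by auto
  next
    case False
    hence "n \<le> k" using Suc by simp
    hence "h n (Suc k) (sel (Suc k)) = h n k (h k (Suc k) (sel (Suc k)))"
      using comp[of n k "Suc k" "sel (Suc k)"] sel by simp
    thus ?thesis using sel Suc.IH \<open>n \<le> k\<close> by simp
  qed
qed




definition HP :: "(real \<times> real) set" where "HP = {p. fst p + snd p > 0}"

locale mx =
  fixes sc :: "'k::field \<Rightarrow> 'v::ab_group_add \<Rightarrow> 'v" and V :: "real \<times> real \<Rightarrow> 'v set"
    and F :: "real \<times> real \<Rightarrow> real \<times> real \<Rightarrow> 'v \<Rightarrow> 'v"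
    and x x' y y' :: real and z :: 'v
  assumes pm: "pmod sc HP V F" and pf: "pfd sc HP V" and me: "middle_exact HP V F"
    and sq: "x \<le> x'" "y \<le> y'" "x + y > 0"
    and zV: "z \<in> V (x', y')"
    and nz: "\<not> (\<exists>u\<in>V (x, y'). \<exists>w\<in>V (x', y). z = F (x, y') (x', y') u - F (x', y) (x', y') w)"
begin

lemma pmD: "vector_space sc" "\<forall>t\<in>HP. module.subspace sc (V t)"
   "\<forall>s\<in>HP. \<forall>t\<in>HP. s \<le> t \<longrightarrow> (\<forall>x\<in>V s. F s t x \<in> V t) \<and> lin_on sc sc (V s) (F s t)"
   "\<forall>t\<in>HP. \<forall>x\<in>V t. F t t x = x"
   "\<forall>r\<in>HP. \<forall>s\<in>HP. \<forall>t\<in>HP. r \<le> s \<longrightarrow> s \<le> t \<longrightarrow> (\<forall>x\<in>V r. F s t (F r s x) = F r t x)"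
  using pm[unfolded pmod_def] by simp_all

interpretation vs: vector_space sc by (rule pmD(1))

lemma HPI: "x \<le> p \<Longrightarrow> y \<le> q \<Longrightarrow> (p, q) \<in> HP"
  unfolding HP_def using sq by auto

lemma sub: "t \<in> HP \<Longrightarrow> vs.subspace (V t)"
  using pmD(2) by blast

lemma Fin: "s \<in> HP \<Longrightarrow> t \<in> HP \<Longrightarrow> s \<le> t \<Longrightarrow> m \<in> V s \<Longrightarrow> F s t m \<in> V t"
  using pmD(3) by blast

lemma Flin: "s \<in> HP \<Longrightarrow> t \<in> HP \<Longrightarrow> s \<le> t \<Longrightarrow> lin_on sc sc (V s) (F s t)"
  using pmD(3) by blast

lemma Fadd: "s \<in> HP \<Longrightarrow> t \<in> HP \<Longrightarrow> s \<le> t \<Longrightarrow> m \<in> V s \<Longrightarrow> n \<in> V s \<Longrightarrow> F s t (m + n) = F s t m + F s t n"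
  using Flin unfolding lin_on_def by blast

lemma Fscale: "s \<in> HP \<Longrightarrow> t \<in> HP \<Longrightarrow> s \<le> t \<Longrightarrow> m \<in> V s \<Longrightarrow> F s t (sc c m) = sc c (F s t m)"
  using Flin unfolding lin_on_def by blast

lemma F0: "s \<in> HP \<Longrightarrow> t \<in> HP \<Longrightarrow> s \<le> t \<Longrightarrow> F s t 0 = 0"
proof -
  assume h: "s \<in> HP" "t \<in> HP" "s \<le> t"
  have "F s t (sc 0 0) = sc 0 (F s t 0)" using Fscale[OF h] vs.subspace_0[OF sub[OF h(1)]] by blast
  thus ?thesis by simp
qed

lemma Fdiff: "s \<in> HP \<Longrightarrow> t \<in> HP \<Longrightarrow> s \<le> t \<Longrightarrow> m \<in> V s \<Longrightarrow> n \<in> V s \<Longrightarrow> F s t (m - n) = F s t m - F s t n"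
proof -
  assume h: "s \<in> HP" "t \<in> HP" "s \<le> t" "m \<in> V s" "n \<in> V s"
  have "F s t ((m - n) + n) = F s t (m - n) + F s t n"
    using Fadd[OF h(1-3) vs.subspace_diff[OF sub[OF h(1)] h(4,5)] h(5)] .
  thus ?thesis by (simp add: algebra_simps)
qed

lemma Fneg: "s \<in> HP \<Longrightarrow> t \<in> HP \<Longrightarrow> s \<le> t \<Longrightarrow> m \<in> V s \<Longrightarrow> F s t (- m) = - F s t m"
  using Fdiff[of s t 0 m] F0[of s t] vs.subspace_0[OF sub, of s] by simp

lemma Fid: "t \<in> HP \<Longrightarrow> m \<in> V t \<Longrightarrow> F t t m = m"
  using pmD(4) by blast

lemma Fcomp: "r \<in> HP \<Longrightarrow> s \<in> HP \<Longrightarrow> t \<in> HP \<Longrightarrow> r \<le> s \<Longrightarrow> s \<le> t \<Longrightarrow> m \<in> V r \<Longrightarrow> F s t (F r s m) = F r t m"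
  using pmD(5) by blast

lemma findim: "t \<in> HP \<Longrightarrow> \<exists>W. finite W \<and> W \<subseteq> V t \<and> vs.span W = V t"
  using pf unfolding pfd_def by blast

lemma mexact:
  assumes "p \<le> p'" "q \<le> q'" "(p, q) \<in> HP" "(p, q') \<in> HP" "(p', q) \<in> HP" "(p', q') \<in> HP"
    and "u \<in> V (p, q')" "w \<in> V (p', q)" "F (p, q') (p', q') u = F (p', q) (p', q') w"
  shows "\<exists>e\<in>V (p, q). F (p, q) (p, q') e = u \<and> F (p, q) (p', q) e = w"
proof -
  have "(\<lambda>v. (F (p, q) (p, q') v, F (p, q) (p', q) v)) ` V (p, q) =
          {(u, w). u \<in> V (p, q') \<and> w \<in> V (p', q) \<and> F (p, q') (p', q') u - F (p', q) (p', q') w = 0}"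
    using me assms(1-6) unfolding middle_exact_def Let_def by blast
  moreover have "(u, w) \<in> {(u, w). u \<in> V (p, q') \<and> w \<in> V (p', q) \<and> F (p, q') (p', q') u - F (p', q) (p', q') w = 0}"
    using assms(7-9) by simp
  ultimately have "(u, w) \<in> (\<lambda>v. (F (p, q) (p, q') v, F (p, q) (p', q) v)) ` V (p, q)" by simp
  then obtain e where "e \<in> V (p, q)" "(u, w) = (F (p, q) (p, q') e, F (p, q) (p', q) e)" by blast
  thus ?thesis by auto
qed


definition I :: "real \<Rightarrow> real \<Rightarrow> 'v set" where
  "I p q = {F (x, q) (p, q) u + F (p, y) (p, q) w | u w. u \<in> V (x, q) \<and> w \<in> V (p, y)}"

lemma I_sub: assumes "x \<le> p" "y \<le> q" shows "vs.subspace (I p q)" "I p q \<subseteq> V (p, q)"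
proof -
  have h: "(x, q) \<in> HP" "(p, y) \<in> HP" "(p, q) \<in> HP" using HPI assms sq by auto
  have le: "(x, q) \<le> (p, q)" "(p, y) \<le> (p, q)" using assms by auto
  note sx = sub[OF h(1)] and sy = sub[OF h(2)] and sp = sub[OF h(3)]
  show "I p q \<subseteq> V (p, q)"
  proof
    fix v assume "v \<in> I p q"
    then obtain u w where uw: "u \<in> V (x, q)" "w \<in> V (p, y)" "v = F (x, q) (p, q) u + F (p, y) (p, q) w"
      unfolding I_def by blast
    show "v \<in> V (p, q)" unfolding uw(3)
      by (rule vs.subspace_add[OF sp Fin[OF h(1) h(3) le(1) uw(1)] Fin[OF h(2) h(3) le(2) uw(2)]])
  qed
  show "vs.subspace (I p q)"
  proof (rule vs.subspaceI)
    have "F (x, q) (p, q) 0 + F (p, y) (p, q) 0 = 0" using F0[OF h(1,3) le(1)] F0[OF h(2,3) le(2)] by simp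
    thus "0 \<in> I p q" unfolding I_def using vs.subspace_0[OF sx] vs.subspace_0[OF sy] by force
  next
    fix v v' assume "v \<in> I p q" "v' \<in> I p q"
    then obtain u w u' w' where uw: "u \<in> V (x, q)" "w \<in> V (p, y)" "v = F (x, q) (p, q) u + F (p, y) (p, q) w"
      "u' \<in> V (x, q)" "w' \<in> V (p, y)" "v' = F (x, q) (p, q) u' + F (p, y) (p, q) w'"
      unfolding I_def by blast
    have "v + v' = F (x, q) (p, q) (u + u') + F (p, y) (p, q) (w + w')"
      unfolding uw(3,6) Fadd[OF h(1,3) le(1) uw(1,4)] Fadd[OF h(2,3) le(2) uw(2,5)] by (simp add: algebra_simps)
    thus "v + v' \<in> I p q" unfolding I_def using vs.subspace_add[OF sx uw(1,4)] vs.subspace_add[OF sy uw(2,5)] by blast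
  next
    fix c v assume "v \<in> I p q"
    then obtain u w where uw: "u \<in> V (x, q)" "w \<in> V (p, y)" "v = F (x, q) (p, q) u + F (p, y) (p, q) w"
      unfolding I_def by blast
    have "sc c v = F (x, q) (p, q) (sc c u) + F (p, y) (p, q) (sc c w)"
      unfolding uw(3) Fscale[OF h(1,3) le(1) uw(1)] Fscale[OF h(2,3) le(2) uw(2)] by (simp add: vs.scale_right_distrib)
    thus "sc c v \<in> I p q" unfolding I_def using vs.subspace_scale[OF sx uw(1)] vs.subspace_scale[OF sy uw(2)] by blast
  qed
qed

lemma I_left: assumes "x \<le> p" "y \<le> q0" "q0 \<le> q" "u \<in> V (x, q0)" shows "F (x, q0) (p, q) u \<in> I p q"
proof -
  have h: "(x, q0) \<in> HP" "(x, q) \<in> HP" "(p, y) \<in> HP" "(p, q) \<in> HP" using HPI assms sq by auto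
  have le: "(x, q0) \<le> (x, q)" "(x, q) \<le> (p, q)" "(p, y) \<le> (p, q)" using assms by auto
  have "F (x, q0) (p, q) u = F (x, q) (p, q) (F (x, q0) (x, q) u) + F (p, y) (p, q) 0"
    using Fcomp[OF h(1,2,4) le(1,2) assms(4)] F0[OF h(3,4) le(3)] by simp
  thus ?thesis unfolding I_def using Fin[OF h(1,2) le(1) assms(4)] vs.subspace_0[OF sub[OF h(3)]] by blast
qed

lemma I_bot: assumes "y \<le> q" "x \<le> p0" "p0 \<le> p" "w \<in> V (p0, y)" shows "F (p0, y) (p, q) w \<in> I p q"
proof -
  have h: "(p0, y) \<in> HP" "(p, y) \<in> HP" "(x, q) \<in> HP" "(p, q) \<in> HP" using HPI assms sq by auto
  have le: "(p0, y) \<le> (p, y)" "(p, y) \<le> (p, q)" "(x, q) \<le> (p, q)" using assms by auto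
  have "F (p0, y) (p, q) w = F (x, q) (p, q) 0 + F (p, y) (p, q) (F (p0, y) (p, y) w)"
    using Fcomp[OF h(1,2,4) le(1,2) assms(4)] F0[OF h(3,4) le(3)] by simp
  thus ?thesis unfolding I_def using Fin[OF h(1,2) le(1) assms(4)] vs.subspace_0[OF sub[OF h(3)]] by blast
qed

lemma I_map: assumes "x \<le> p" "p \<le> p'" "y \<le> q" "q \<le> q'" "m \<in> I p q" shows "F (p, q) (p', q') m \<in> I p' q'"
proof -
  have h: "(x, q) \<in> HP" "(p, y) \<in> HP" "(p, q) \<in> HP" "(p', q') \<in> HP" using HPI assms sq by auto
  have le: "(x, q) \<le> (p, q)" "(p, y) \<le> (p, q)" "(p, q) \<le> (p', q')" using assms by auto
  obtain u w where uw: "u \<in> V (x, q)" "w \<in> V (p, y)" "m = F (x, q) (p, q) u + F (p, y) (p, q) w"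
    using assms(5) unfolding I_def by blast
  have "F (p, q) (p', q') m = F (x, q) (p', q') u + F (p, y) (p', q') w"
    unfolding uw(3) using Fadd[OF h(3,4) le(3) Fin[OF h(1,3) le(1) uw(1)] Fin[OF h(2,3) le(2) uw(2)]]
      Fcomp[OF h(1,3,4) le(1,3) uw(1)] Fcomp[OF h(2,3,4) le(2,3) uw(2)] by simp
  moreover have "F (x, q) (p', q') u \<in> I p' q'" using I_left[of p' q q' u] assms uw sq by simp
  moreover have "F (p, y) (p', q') w \<in> I p' q'" using I_bot[of q' p p' w] assms uw sq by simp
  ultimately show ?thesis using vs.subspace_add[OF I_sub(1)[of p' q']] assms by simp
qed


lemma Kinj_h: assumes "x \<le> p" "p \<le> p'" "y \<le> q" "m \<in> V (p, q)" "F (p, q) (p', q) m \<in> I p' q"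
  shows "m \<in> I p q"
proof -
  have h: "(x, q) \<in> HP" "(p, y) \<in> HP" "(p, q) \<in> HP" "(p', q) \<in> HP" "(p', y) \<in> HP" using HPI assms sq by auto
  have le: "(x, q) \<le> (p, q)" "(p, q) \<le> (p', q)" "(x, q) \<le> (p', q)" "(p', y) \<le> (p', q)" using assms by auto
  obtain u w where uw: "u \<in> V (x, q)" "w \<in> V (p', y)" "F (p, q) (p', q) m = F (x, q) (p', q) u + F (p', y) (p', q) w"
    using assms(5) unfolding I_def by blast
  define m' where "m' = m - F (x, q) (p, q) u"
  have m'V: "m' \<in> V (p, q)" unfolding m'_def using vs.subspace_diff[OF sub[OF h(3)] assms(4) Fin[OF h(1,3) le(1) uw(1)]] .
  have "F (p, q) (p', q) m' = F (p', y) (p', q) w"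
    unfolding m'_def Fdiff[OF h(3,4) le(2) assms(4) Fin[OF h(1,3) le(1) uw(1)]] Fcomp[OF h(1,3,4) le(1,2) uw(1)] uw(3) by simp
  from mexact[of p p' y q, OF assms(2) assms(3) h(2) h(3) h(5) h(4) m'V uw(2) this]
  obtain e where e: "e \<in> V (p, y)" "F (p, y) (p, q) e = m'" by blast
  have "m = F (x, q) (p, q) u + F (p, y) (p, q) e" using e(2) unfolding m'_def by simp
  thus ?thesis unfolding I_def using uw(1) e(1) by blast
qed

lemma Kinj_v: assumes "x \<le> p" "y \<le> q" "q \<le> q'" "m \<in> V (p, q)" "F (p, q) (p, q') m \<in> I p q'"
  shows "m \<in> I p q"
proof -
  have h: "(x, q) \<in> HP" "(p, y) \<in> HP" "(p, q) \<in> HP" "(p, q') \<in> HP" "(x, q') \<in> HP" using HPI assms sq by auto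
  have le: "(p, y) \<le> (p, q)" "(p, q) \<le> (p, q')" "(x, q') \<le> (p, q')" using assms by auto
  obtain u w where uw: "u \<in> V (x, q')" "w \<in> V (p, y)" "F (p, q) (p, q') m = F (x, q') (p, q') u + F (p, y) (p, q') w"
    using assms(5) unfolding I_def by blast
  define m' where "m' = m - F (p, y) (p, q) w"
  have m'V: "m' \<in> V (p, q)" unfolding m'_def using vs.subspace_diff[OF sub[OF h(3)] assms(4) Fin[OF h(2,3) le(1) uw(2)]] .
  have "F (x, q') (p, q') u = F (p, q) (p, q') m'"
    unfolding m'_def Fdiff[OF h(3,4) le(2) assms(4) Fin[OF h(2,3) le(1) uw(2)]] Fcomp[OF h(2,3,4) le(1,2) uw(2)] uw(3) by simp
  from mexact[of x p q q', OF assms(1) assms(3) h(1) h(5) h(3) h(4) uw(1) m'V this]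
  obtain e where e: "e \<in> V (x, q)" "F (x, q) (p, q) e = m'" by blast
  have "m = F (x, q) (p, q) e + F (p, y) (p, q) w" using e(2) unfolding m'_def by simp
  thus ?thesis unfolding I_def using uw(2) e(1) by blast
qed

lemma Kinj: assumes "x \<le> p" "p \<le> p'" "y \<le> q" "q \<le> q'" "m \<in> V (p, q)" "F (p, q) (p', q') m \<in> I p' q'"
  shows "m \<in> I p q"
proof -
  have h: "(p, q) \<in> HP" "(p', q) \<in> HP" "(p', q') \<in> HP" using HPI assms sq by auto
  have le: "(p, q) \<le> (p', q)" "(p', q) \<le> (p', q')" using assms by auto
  have "F (p', q) (p', q') (F (p, q) (p', q) m) \<in> I p' q'" using Fcomp[OF h le assms(5)] assms(6) by simp
  hence "F (p, q) (p', q) m \<in> I p' q" using Kinj_v[of p' q q'] assms Fin[OF h(1,2) le(1) assms(5)] by simp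
  thus ?thesis using Kinj_h[of p p' q m] assms by simp
qed

lemma Ksq:
  assumes "x \<le> p" "p \<le> p'" "y \<le> q" "q \<le> q'" "p' \<le> r1" "q' \<le> r2"
    and "m1 \<in> V (p, q')" "m2 \<in> V (p', q)" "F (p, q') (r1, r2) m1 - F (p', q) (r1, r2) m2 \<in> I r1 r2"
  shows "\<exists>e\<in>V (p, q). F (p, q) (r1, r2) e - F (p, q') (r1, r2) m1 \<in> I r1 r2"
proof -
  have h: "(p, q) \<in> HP" "(p, q') \<in> HP" "(p', q) \<in> HP" "(p', q') \<in> HP" "(r1, r2) \<in> HP"
    "(x, q') \<in> HP" "(p', y) \<in> HP" using HPI assms sq by auto
  have le: "(p, q') \<le> (p', q')" "(p', q) \<le> (p', q')" "(p', q') \<le> (r1, r2)" "(x, q') \<le> (p, q')"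
    "(p', y) \<le> (p', q)" "(p, q) \<le> (p, q')" "(p, q') \<le> (r1, r2)" "(x, q') \<le> (p', q')" "(p', y) \<le> (p', q')"
    "(x, q') \<le> (r1, r2)"
    using assms by auto
  define n where "n = F (p, q') (p', q') m1 - F (p', q) (p', q') m2"
  have Fm1: "F (p, q') (p', q') m1 \<in> V (p', q')" using Fin[OF h(2,4) le(1) assms(7)] .
  have Fm2: "F (p', q) (p', q') m2 \<in> V (p', q')" using Fin[OF h(3,4) le(2) assms(8)] .
  have nV: "n \<in> V (p', q')" unfolding n_def using vs.subspace_diff[OF sub[OF h(4)] Fm1 Fm2] .
  have "F (p', q') (r1, r2) n = F (p, q') (r1, r2) m1 - F (p', q) (r1, r2) m2"
    unfolding n_def Fdiff[OF h(4,5) le(3) Fm1 Fm2] Fcomp[OF h(2,4,5) le(1,3) assms(7)] Fcomp[OF h(3,4,5) le(2,3) assms(8)] ..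
  hence "n \<in> I p' q'" using Kinj[of p' r1 q' r2 n] assms nV by simp
  then obtain u w where uw: "u \<in> V (x, q')" "w \<in> V (p', y)" "n = F (x, q') (p', q') u + F (p', y) (p', q') w"
    unfolding I_def by blast
  define u' where "u' = F (x, q') (p, q') u"
  define w' where "w' = F (p', y) (p', q) w"
  have u'V: "u' \<in> V (p, q')" unfolding u'_def using Fin[OF h(6,2) le(4) uw(1)] .
  have w'V: "w' \<in> V (p', q)" unfolding w'_def using Fin[OF h(7,3) le(5) uw(2)] .
  have Fu': "F (p, q') (p', q') u' = F (x, q') (p', q') u" unfolding u'_def using Fcomp[OF h(6,2,4) le(4,1) uw(1)] .
  have Fw': "F (p', q) (p', q') w' = F (p', y) (p', q') w" unfolding w'_def using Fcomp[OF h(7,3,4) le(5,2) uw(2)] .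
  have m1u: "m1 - u' \<in> V (p, q')" using vs.subspace_diff[OF sub[OF h(2)] assms(7) u'V] .
  have m2w: "m2 + w' \<in> V (p', q)" using vs.subspace_add[OF sub[OF h(3)] assms(8) w'V] .
  have "F (p, q') (p', q') (m1 - u') = F (p', q) (p', q') (m2 + w')"
    unfolding Fdiff[OF h(2,4) le(1) assms(7) u'V] Fadd[OF h(3,4) le(2) assms(8) w'V] Fu' Fw'
    using uw(3) unfolding n_def by (simp add: algebra_simps eq_diff_eq diff_eq_eq)
  from mexact[of p p' q q', OF assms(2) assms(4) h(1) h(2) h(3) h(4) m1u m2w this]
  obtain e where e: "e \<in> V (p, q)" "F (p, q) (p, q') e = m1 - u'" by blast
  have "F (p, q) (r1, r2) e = F (p, q') (r1, r2) (m1 - u')" using Fcomp[OF h(1,2,5) le(6,7) e(1)] e(2) by simp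
  also have "\<dots> = F (p, q') (r1, r2) m1 - F (x, q') (r1, r2) u"
    using Fdiff[OF h(2,5) le(7) assms(7) u'V] Fcomp[OF h(6,2,5) le(4,7) uw(1)] unfolding u'_def by simp
  finally have "F (p, q) (r1, r2) e - F (p, q') (r1, r2) m1 = - F (x, q') (r1, r2) u" by simp
  moreover have "F (x, q') (r1, r2) u \<in> I r1 r2" using I_left[of r1 q' r2 u] assms uw(1) sq by simp
  moreover have "vs.subspace (I r1 r2)" using I_sub(1)[of r1 r2] assms by simp
  ultimately have "F (p, q) (r1, r2) e - F (p, q') (r1, r2) m1 \<in> I r1 r2" using vs.subspace_neg by metis
  thus ?thesis using e(1) by blast
qed


lemma Kint_aux:
  assumes "x \<le> p1" "y \<le> q1" "p1 \<le> p2" "y \<le> q2" "p2 \<le> r1" "q1 \<le> r2" "q2 \<le> r2"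
    "m1 \<in> V (p1, q1)" "m2 \<in> V (p2, q2)" "F (p1, q1) (r1, r2) m1 - F (p2, q2) (r1, r2) m2 \<in> I r1 r2"
  shows "\<exists>e\<in>V (min p1 p2, min q1 q2). F (min p1 p2, min q1 q2) (r1, r2) e - F (p1, q1) (r1, r2) m1 \<in> I r1 r2"
proof (cases "q2 \<le> q1")
  case True
  have "min p1 p2 = p1" "min q1 q2 = q2" using True assms by auto
  thus ?thesis using Ksq[of p1 p2 q2 q1 r1 r2 m1 m2] assms True by simp
next
  case False
  have "min p1 p2 = p1" "min q1 q2 = q1" using False assms by auto
  moreover have "0 \<in> I r1 r2" using vs.subspace_0[OF I_sub(1)[of r1 r2]] assms by simp
  ultimately show ?thesis using assms(8) by (intro bexI[of _ m1]) auto
qed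

lemma Kint:
  assumes "x \<le> p1" "y \<le> q1" "x \<le> p2" "y \<le> q2" "p1 \<le> r1" "q1 \<le> r2" "p2 \<le> r1" "q2 \<le> r2"
    "m1 \<in> V (p1, q1)" "m2 \<in> V (p2, q2)" "F (p1, q1) (r1, r2) m1 - F (p2, q2) (r1, r2) m2 \<in> I r1 r2"
  shows "\<exists>e\<in>V (min p1 p2, min q1 q2). F (min p1 p2, min q1 q2) (r1, r2) e - F (p1, q1) (r1, r2) m1 \<in> I r1 r2"
proof (cases "p1 \<le> p2")
  case True thus ?thesis using Kint_aux[of p1 q1 p2 q2 r1 r2 m1 m2] assms by simp
next
  case False
  have Isub: "vs.subspace (I r1 r2)" using I_sub(1)[of r1 r2] assms by simp
  have "F (p2, q2) (r1, r2) m2 - F (p1, q1) (r1, r2) m1 = - (F (p1, q1) (r1, r2) m1 - F (p2, q2) (r1, r2) m2)" by simp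
  hence h: "F (p2, q2) (r1, r2) m2 - F (p1, q1) (r1, r2) m1 \<in> I r1 r2" using vs.subspace_neg[OF Isub assms(11)] by simp
  obtain e where e: "e \<in> V (min p2 p1, min q2 q1)" "F (min p2 p1, min q2 q1) (r1, r2) e - F (p2, q2) (r1, r2) m2 \<in> I r1 r2"
    using Kint_aux[of p2 q2 p1 q1 r1 r2 m2 m1] assms False h by force
  have "F (min p2 p1, min q2 q1) (r1, r2) e - F (p1, q1) (r1, r2) m1 =
     (F (min p2 p1, min q2 q1) (r1, r2) e - F (p2, q2) (r1, r2) m2) - (F (p1, q1) (r1, r2) m1 - F (p2, q2) (r1, r2) m2)"
    by simp
  hence "F (min p2 p1, min q2 q1) (r1, r2) e - F (p1, q1) (r1, r2) m1 \<in> I r1 r2"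
    using vs.subspace_diff[OF Isub e(2) assms(11)] by simp
  thus ?thesis using e(1) unfolding min.commute[of p2 p1] min.commute[of q2 q1] by blast
qed

end



context mx begin

interpretation vs: vector_space sc by (rule pmD(1))

lemma nondeg: "x < x'" "y < y'"
proof -
  have hp: "(x, y) \<in> HP" "(x, y') \<in> HP" "(x', y) \<in> HP" "(x', y') \<in> HP" using HPI sq by auto
  show "x < x'"
  proof (rule ccontr)
    assume "\<not> x < x'" hence e: "x = x'" using sq by simp
    have "z = F (x, y') (x', y') z - F (x', y) (x', y') 0"
      using Fid[OF hp(4) zV] F0[of "(x', y)" "(x', y')"] hp sq unfolding e by simp
    moreover have "0 \<in> V (x', y)" using vs.subspace_0[OF sub[OF hp(3)]] .
    ultimately show False using nz zV unfolding e by blast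
  qed
  show "y < y'"
  proof (rule ccontr)
    assume "\<not> y < y'" hence e: "y = y'" using sq by simp
    have "z = F (x, y') (x', y') 0 - F (x', y) (x', y') (- z)"
      using Fid[OF hp(4)] F0[of "(x, y')" "(x', y')"] hp sq zV Fneg[of "(x', y')" "(x', y')" z] unfolding e by simp
    moreover have "0 \<in> V (x, y')" using vs.subspace_0[OF sub[OF hp(2)]] .
    moreover have "- z \<in> V (x', y)" using vs.subspace_neg[OF sub[OF hp(4)] zV] unfolding e .
    ultimately show False using nz unfolding e by blast
  qed
qed

lemma z_notin_I: "z \<notin> I x' y'"
proof
  assume "z \<in> I x' y'"
  then obtain u w where uw: "u \<in> V (x, y')" "w \<in> V (x', y)" "z = F (x, y') (x', y') u + F (x', y) (x', y') w"
    unfolding I_def by blast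
  have hp: "(x', y) \<in> HP" "(x', y') \<in> HP" using HPI sq by auto
  have "z = F (x, y') (x', y') u - F (x', y) (x', y') (- w)" using uw(3) Fneg[OF hp _ uw(2)] sq by simp
  moreover have "- w \<in> V (x', y)" using vs.subspace_neg[OF sub[OF hp(1)] uw(2)] .
  ultimately show False using nz uw(1) by blast
qed

definition Pre :: "real \<times> real \<Rightarrow> 'v set" where
  "Pre s = {n \<in> V (x', y'). \<exists>m\<in>V s. n - F s (x', y') m \<in> I x' y'}"

lemma Id_sub: "vs.subspace (I x' y')" "I x' y' \<subseteq> V (x', y')"
  using I_sub[of x' y'] sq by auto

lemma Pre_sub:
  assumes "x \<le> p" "p \<le> x'" "y \<le> q" "q \<le> y'"
  shows "vs.subspace (Pre (p, q))" "I x' y' \<subseteq> Pre (p, q)" "Pre (p, q) \<subseteq> V (x', y')"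
proof -
  have h: "(p, q) \<in> HP" "(x', y') \<in> HP" using HPI assms sq by auto
  have le: "(p, q) \<le> (x', y')" using assms by auto
  note Is = Id_sub(1)
  show "Pre (p, q) \<subseteq> V (x', y')" unfolding Pre_def by blast
  show "I x' y' \<subseteq> Pre (p, q)"
  proof
    fix n assume n: "n \<in> I x' y'"
    have "n - F (p, q) (x', y') 0 \<in> I x' y'" using F0[OF h le] n by simp
    thus "n \<in> Pre (p, q)" unfolding Pre_def using n Id_sub(2) vs.subspace_0[OF sub[OF h(1)]] by blast
  qed
  show "vs.subspace (Pre (p, q))"
  proof (rule vs.subspaceI)
    show "0 \<in> Pre (p, q)" using \<open>I x' y' \<subseteq> Pre (p, q)\<close> vs.subspace_0[OF Is] by blast
  next
    fix n n' assume "n \<in> Pre (p, q)" "n' \<in> Pre (p, q)"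
    then obtain m m' where mm: "n \<in> V (x', y')" "m \<in> V (p, q)" "n - F (p, q) (x', y') m \<in> I x' y'"
      "n' \<in> V (x', y')" "m' \<in> V (p, q)" "n' - F (p, q) (x', y') m' \<in> I x' y'" unfolding Pre_def by blast
    have e: "(n + n') - F (p, q) (x', y') (m + m') = (n - F (p, q) (x', y') m) + (n' - F (p, q) (x', y') m')"
      using Fadd[OF h le mm(2,5)] by (simp add: algebra_simps)
    have "(n + n') - F (p, q) (x', y') (m + m') \<in> I x' y'" unfolding e by (rule vs.subspace_add[OF Is mm(3,6)])
    thus "n + n' \<in> Pre (p, q)" unfolding Pre_def
      using vs.subspace_add[OF sub[OF h(2)] mm(1,4)] vs.subspace_add[OF sub[OF h(1)] mm(2,5)] by blast
  next
    fix c n assume "n \<in> Pre (p, q)"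
    then obtain m where mm: "n \<in> V (x', y')" "m \<in> V (p, q)" "n - F (p, q) (x', y') m \<in> I x' y'" unfolding Pre_def by blast
    have e: "sc c n - F (p, q) (x', y') (sc c m) = sc c (n - F (p, q) (x', y') m)"
      using Fscale[OF h le mm(2)] by (simp add: vs.scale_right_diff_distrib)
    have "sc c n - F (p, q) (x', y') (sc c m) \<in> I x' y'" unfolding e by (rule vs.subspace_scale[OF Is mm(3)])
    thus "sc c n \<in> Pre (p, q)" unfolding Pre_def
      using vs.subspace_scale[OF sub[OF h(2)] mm(1)] vs.subspace_scale[OF sub[OF h(1)] mm(2)] by blast
  qed
qed

lemma Pre_mono:
  assumes "x \<le> p" "p \<le> p'" "p' \<le> x'" "y \<le> q" "q \<le> q'" "q' \<le> y'"
  shows "Pre (p, q) \<subseteq> Pre (p', q')"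
proof
  have h: "(p, q) \<in> HP" "(p', q') \<in> HP" "(x', y') \<in> HP" using HPI assms sq by auto
  have le: "(p, q) \<le> (p', q')" "(p', q') \<le> (x', y')" using assms by auto
  fix n assume "n \<in> Pre (p, q)"
  then obtain m where mm: "n \<in> V (x', y')" "m \<in> V (p, q)" "n - F (p, q) (x', y') m \<in> I x' y'" unfolding Pre_def by blast
  have "n - F (p', q') (x', y') (F (p, q) (p', q') m) \<in> I x' y'" using Fcomp[OF h le mm(2)] mm(3) by simp
  thus "n \<in> Pre (p', q')" unfolding Pre_def using mm(1) Fin[OF h(1,2) le(1) mm(2)] by blast
qed

lemma Pre_left: assumes "y \<le> q" "q \<le> y'" shows "Pre (x, q) \<subseteq> I x' y'"
proof
  fix n assume "n \<in> Pre (x, q)"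
  then obtain m where mm: "n \<in> V (x', y')" "m \<in> V (x, q)" "n - F (x, q) (x', y') m \<in> I x' y'" unfolding Pre_def by blast
  have "F (x, q) (x', y') m \<in> I x' y'" using I_left[of x' q y' m] sq nondeg assms mm(2) by simp
  from vs.subspace_add[OF Id_sub(1) mm(3) this] show "n \<in> I x' y'" by simp
qed

lemma Pre_bot: assumes "x \<le> p" "p \<le> x'" shows "Pre (p, y) \<subseteq> I x' y'"
proof
  fix n assume "n \<in> Pre (p, y)"
  then obtain m where mm: "n \<in> V (x', y')" "m \<in> V (p, y)" "n - F (p, y) (x', y') m \<in> I x' y'" unfolding Pre_def by blast
  have "F (p, y) (x', y') m \<in> I x' y'" using I_bot[of y' p x' m] sq nondeg assms mm(2) by simp
  from vs.subspace_add[OF Id_sub(1) mm(3) this] show "n \<in> I x' y'" by simp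
qed

lemma Pre_int:
  assumes "x \<le> p1" "p1 \<le> x'" "y \<le> q1" "q1 \<le> y'" "x \<le> p2" "p2 \<le> x'" "y \<le> q2" "q2 \<le> y'"
    "n \<in> Pre (p1, q1)" "n \<in> Pre (p2, q2)"
  shows "n \<in> Pre (min p1 p2, min q1 q2)"
proof -
  obtain m1 where m1: "n \<in> V (x', y')" "m1 \<in> V (p1, q1)" "n - F (p1, q1) (x', y') m1 \<in> I x' y'"
    using assms(9) unfolding Pre_def by blast
  obtain m2 where m2: "m2 \<in> V (p2, q2)" "n - F (p2, q2) (x', y') m2 \<in> I x' y'"
    using assms(10) unfolding Pre_def by blast
  have "F (p1, q1) (x', y') m1 - F (p2, q2) (x', y') m2 = (n - F (p2, q2) (x', y') m2) - (n - F (p1, q1) (x', y') m1)"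
    by simp
  hence "F (p1, q1) (x', y') m1 - F (p2, q2) (x', y') m2 \<in> I x' y'" using vs.subspace_diff[OF Id_sub(1) m2(2) m1(3)] by simp
  then obtain e where e: "e \<in> V (min p1 p2, min q1 q2)"
    "F (min p1 p2, min q1 q2) (x', y') e - F (p1, q1) (x', y') m1 \<in> I x' y'"
    using Kint[of p1 q1 p2 q2 x' y' m1 m2] assms m1(2) m2(1) by blast
  have "n - F (min p1 p2, min q1 q2) (x', y') e = (n - F (p1, q1) (x', y') m1) - (F (min p1 p2, min q1 q2) (x', y') e - F (p1, q1) (x', y') m1)"
    by simp
  hence "n - F (min p1 p2, min q1 q2) (x', y') e \<in> I x' y'" using vs.subspace_diff[OF Id_sub(1) m1(3) e(2)] by simp
  thus ?thesis unfolding Pre_def using m1(1) e(1) by blast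
qed

end



context mx begin

interpretation vs: vector_space sc by (rule pmD(1))

lemma Pre_top: "Pre (x', y') = V (x', y')"
proof
  show "Pre (x', y') \<subseteq> V (x', y')" unfolding Pre_def by blast
  show "V (x', y') \<subseteq> Pre (x', y')"
  proof
    fix n assume n: "n \<in> V (x', y')"
    have hp: "(x', y') \<in> HP" using HPI sq by auto
    have "n - F (x', y') (x', y') n \<in> I x' y'" using Fid[OF hp n] vs.subspace_0[OF Id_sub(1)] by simp
    thus "n \<in> Pre (x', y')" unfolding Pre_def using n by blast
  qed
qed

lemma Vd_fin: "\<exists>W. finite W \<and> vs.span W = V (x', y')"
  using findim[of "(x', y')"] HPI sq by auto

lemma dim_min_eq:
  assumes "vs.subspace S" "vs.subspace S'" "S \<subseteq> S'" "S' \<subseteq> V (x', y')" "vs.dim S' \<le> vs.dim S"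
  shows "S = S'"
proof -
  obtain W where W: "finite W" "vs.span W = V (x', y')" using Vd_fin by blast
  show ?thesis using vs.dim_eq_sub[OF assms(1-3) _ W(1) assms(5)] assms(4) W(2) by simp
qed

definition J1 :: "real set" where
  "J1 = {p. x' \<le> p \<or> (x \<le> p \<and> p \<le> x' \<and> \<not> Pre (p, y') \<subseteq> I x' y')}"

lemma zd: "z \<in> V (x', y') - I x' y'" using zV z_notin_I by simp

lemma J1_iff: "x \<le> p \<Longrightarrow> p \<le> x' \<Longrightarrow> p \<in> J1 \<longleftrightarrow> \<not> Pre (p, y') \<subseteq> I x' y'"
  unfolding J1_def using Pre_top zd by (cases "p = x'") auto

lemma J1_x': "x' \<in> J1" unfolding J1_def by simp

lemma J1_up: "upclosed J1"
  unfolding upclosed_def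
proof (intro ballI allI impI)
  fix p p2 assume p: "p \<in> J1" "p \<le> p2"
  show "p2 \<in> J1"
  proof (cases "x' \<le> p2")
    case True thus ?thesis unfolding J1_def by simp
  next
    case False
    hence "x \<le> p" "p \<le> x'" "\<not> Pre (p, y') \<subseteq> I x' y'" using p unfolding J1_def by auto
    moreover have "Pre (p, y') \<subseteq> Pre (p2, y')" using Pre_mono[of p p2 y' y'] calculation(1) p False sq by simp
    ultimately show ?thesis unfolding J1_def using False p by auto
  qed
qed

lemma J1_gt: "p \<in> J1 \<Longrightarrow> x < p"
proof -
  assume p: "p \<in> J1"
  show "x < p"
  proof (rule ccontr)
    assume "\<not> x < p"
    hence "p \<le> x" by simp
    hence "p = x" "p \<le> x'" using p nondeg unfolding J1_def by auto
    thus False using J1_iff[of p] p Pre_left[of y'] sq by simp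
  qed
qed

definition p1 :: real where
  "p1 = (SOME p. (p \<in> J1 \<and> p \<le> x') \<and> (\<forall>p'. p' \<in> J1 \<and> p' \<le> x' \<longrightarrow> vs.dim (Pre (p, y')) \<le> vs.dim (Pre (p', y'))))"

lemma p1_props: "p1 \<in> J1" "p1 \<le> x'" "\<And>p'. p' \<in> J1 \<Longrightarrow> p' \<le> x' \<Longrightarrow> vs.dim (Pre (p1, y')) \<le> vs.dim (Pre (p', y'))"
proof -
  have "\<exists>p. (p \<in> J1 \<and> p \<le> x') \<and> (\<forall>p'. p' \<in> J1 \<and> p' \<le> x' \<longrightarrow> vs.dim (Pre (p, y')) \<le> vs.dim (Pre (p', y')))"
    by (rule ex_has_least_nat[of "\<lambda>p. p \<in> J1 \<and> p \<le> x'" x']) (simp add: J1_x')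
  from someI_ex[OF this] show "p1 \<in> J1" "p1 \<le> x'" "\<And>p'. p' \<in> J1 \<Longrightarrow> p' \<le> x' \<Longrightarrow> vs.dim (Pre (p1, y')) \<le> vs.dim (Pre (p', y'))"
    unfolding p1_def[symmetric] by blast+
qed

definition Pst :: "'v set" where "Pst = Pre (p1, y')"

lemma Pst_props: "vs.subspace Pst" "Pst \<subseteq> V (x', y')" "\<not> Pst \<subseteq> I x' y'" "\<And>p. p \<in> J1 \<Longrightarrow> p \<le> x' \<Longrightarrow> Pst \<subseteq> Pre (p, y')"
proof -
  have x1: "x \<le> p1" using J1_gt[OF p1_props(1)] by simp
  show "vs.subspace Pst" "Pst \<subseteq> V (x', y')" unfolding Pst_def using Pre_sub[of p1 y'] x1 p1_props sq by auto
  show "\<not> Pst \<subseteq> I x' y'" unfolding Pst_def using J1_iff[OF x1 p1_props(2)] p1_props(1) by simp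
  fix p assume p: "p \<in> J1" "p \<le> x'"
  have xp: "x \<le> p" using J1_gt[OF p(1)] by simp
  show "Pst \<subseteq> Pre (p, y')"
  proof (cases "p1 \<le> p")
    case True thus ?thesis unfolding Pst_def using Pre_mono[of p1 p y' y'] x1 p sq by simp
  next
    case False
    have "Pre (p, y') \<subseteq> Pre (p1, y')" using Pre_mono[of p p1 y' y'] xp p1_props False sq by simp
    moreover have "Pre (p, y') = Pre (p1, y')"
      using dim_min_eq[OF Pre_sub(1)[of p y'] Pre_sub(1)[of p1 y'] calculation Pre_sub(3)[of p1 y']]
        p1_props(3)[OF p] xp x1 p p1_props sq by simp
    ultimately show ?thesis unfolding Pst_def by simp
  qed
qed

definition J2 :: "real set" where
  "J2 = {q. y' \<le> q \<or> (y \<le> q \<and> q \<le> y' \<and> \<not> Pre (x', q) \<inter> Pst \<subseteq> I x' y')}"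

lemma J2_iff: "y \<le> q \<Longrightarrow> q \<le> y' \<Longrightarrow> q \<in> J2 \<longleftrightarrow> \<not> Pre (x', q) \<inter> Pst \<subseteq> I x' y'"
  unfolding J2_def using Pre_top Pst_props(2,3) by (cases "q = y'") auto

lemma J2_y': "y' \<in> J2" unfolding J2_def by simp

lemma J2_up: "upclosed J2"
  unfolding upclosed_def
proof (intro ballI allI impI)
  fix q q2 assume q: "q \<in> J2" "q \<le> q2"
  show "q2 \<in> J2"
  proof (cases "y' \<le> q2")
    case True thus ?thesis unfolding J2_def by simp
  next
    case False
    hence "y \<le> q" "q \<le> y'" "\<not> Pre (x', q) \<inter> Pst \<subseteq> I x' y'" using q unfolding J2_def by auto
    moreover have "Pre (x', q) \<subseteq> Pre (x', q2)" using Pre_mono[of x' x' q q2] calculation(1) q False sq by simp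
    ultimately show ?thesis unfolding J2_def using False q by auto
  qed
qed

lemma J2_gt: "q \<in> J2 \<Longrightarrow> y < q"
proof -
  assume q: "q \<in> J2"
  show "y < q"
  proof (rule ccontr)
    assume "\<not> y < q"
    hence "q \<le> y" by simp
    hence "q = y" "q \<le> y'" using q nondeg unfolding J2_def by auto
    thus False using J2_iff[of q] q Pre_bot[of x'] sq by auto
  qed
qed

definition q1 :: real where
  "q1 = (SOME q. (q \<in> J2 \<and> q \<le> y') \<and> (\<forall>q'. q' \<in> J2 \<and> q' \<le> y' \<longrightarrow> vs.dim (Pre (x', q) \<inter> Pst) \<le> vs.dim (Pre (x', q') \<inter> Pst)))"

lemma q1_props: "q1 \<in> J2" "q1 \<le> y'" "\<And>q'. q' \<in> J2 \<Longrightarrow> q' \<le> y' \<Longrightarrow> vs.dim (Pre (x', q1) \<inter> Pst) \<le> vs.dim (Pre (x', q') \<inter> Pst)"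
proof -
  have "\<exists>q. (q \<in> J2 \<and> q \<le> y') \<and> (\<forall>q'. q' \<in> J2 \<and> q' \<le> y' \<longrightarrow> vs.dim (Pre (x', q) \<inter> Pst) \<le> vs.dim (Pre (x', q') \<inter> Pst))"
    by (rule ex_has_least_nat[of "\<lambda>q. q \<in> J2 \<and> q \<le> y'" y']) (simp add: J2_y')
  from someI_ex[OF this] show "q1 \<in> J2" "q1 \<le> y'" "\<And>q'. q' \<in> J2 \<Longrightarrow> q' \<le> y' \<Longrightarrow> vs.dim (Pre (x', q1) \<inter> Pst) \<le> vs.dim (Pre (x', q') \<inter> Pst)"
    unfolding q1_def[symmetric] by blast+
qed

definition Qst :: "'v set" where "Qst = Pre (x', q1) \<inter> Pst"

lemma Qst_props: "\<not> Qst \<subseteq> I x' y'" "\<And>q. q \<in> J2 \<Longrightarrow> q \<le> y' \<Longrightarrow> Qst \<subseteq> Pre (x', q) \<inter> Pst"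
proof -
  have y1: "y \<le> q1" using J2_gt[OF q1_props(1)] by simp
  show "\<not> Qst \<subseteq> I x' y'" unfolding Qst_def using J2_iff[OF y1 q1_props(2)] q1_props(1) by simp
  fix q assume q: "q \<in> J2" "q \<le> y'"
  have yq: "y \<le> q" using J2_gt[OF q(1)] by simp
  have subs: "vs.subspace (Pre (x', q) \<inter> Pst)" if "y \<le> q" "q \<le> y'" for q
    using vs.subspace_inter[OF Pre_sub(1)[of x' q] Pst_props(1)] that sq by simp
  show "Qst \<subseteq> Pre (x', q) \<inter> Pst"
  proof (cases "q1 \<le> q")
    case True thus ?thesis unfolding Qst_def using Pre_mono[of x' x' q1 q] y1 q sq by auto
  next
    case False
    have "Pre (x', q) \<inter> Pst \<subseteq> Pre (x', q1) \<inter> Pst" using Pre_mono[of x' x' q q1] yq q1_props False sq by auto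
    moreover have "Pre (x', q) \<inter> Pst = Pre (x', q1) \<inter> Pst"
      using dim_min_eq[OF subs[of q] subs[of q1] calculation] Pst_props(2)
        q1_props(3)[OF q] yq y1 q q1_props sq by auto
    ultimately show ?thesis unfolding Qst_def by simp
  qed
qed

definition z0 :: 'v where "z0 = (SOME v. v \<in> Qst \<and> v \<notin> I x' y')"

lemma z0_props: "z0 \<in> Qst" "z0 \<notin> I x' y'" "z0 \<in> V (x', y')" "z0 \<in> Pst"
proof -
  have "\<exists>v. v \<in> Qst \<and> v \<notin> I x' y'" using Qst_props(1) by blast
  from someI_ex[OF this] show "z0 \<in> Qst" "z0 \<notin> I x' y'" unfolding z0_def[symmetric] by blast+
  thus "z0 \<in> V (x', y')" "z0 \<in> Pst" using Pst_props(2) unfolding Qst_def by auto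
qed

lemma KeyB: assumes "p \<in> J1" "q \<in> J2" "p \<le> x'" "q \<le> y'" shows "z0 \<in> Pre (p, q)"
proof -
  have a: "x \<le> p" "y \<le> q" using J1_gt[OF assms(1)] J2_gt[OF assms(2)] by auto
  have "z0 \<in> Pre (p, y')" using Pst_props(4)[OF assms(1,3)] z0_props(4) by blast
  moreover have "z0 \<in> Pre (x', q)" using Qst_props(2)[OF assms(2,4)] z0_props(1) by blast
  ultimately have "z0 \<in> Pre (min p x', min y' q)" using Pre_int[of p y' x' q z0] a assms sq by simp
  thus ?thesis using assms by (simp add: min_absorb1 min_absorb2)
qed

end



context mx begin

interpretation vs: vector_space sc by (rule pmD(1))

definition N :: "real \<Rightarrow> real \<Rightarrow> 'v set" where
  "N r1 r2 = {F (p0, r2) (r1, r2) m1 + F (r1, q0) (r1, r2) m2 | p0 q0 m1 m2.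
     x \<le> p0 \<and> p0 \<notin> J1 \<and> y \<le> q0 \<and> q0 \<notin> J2 \<and> m1 \<in> V (p0, r2) \<and> m2 \<in> V (r1, q0)}"

lemma N_I: "x \<le> p0 \<Longrightarrow> p0 \<notin> J1 \<Longrightarrow> y \<le> q0 \<Longrightarrow> q0 \<notin> J2 \<Longrightarrow> m1 \<in> V (p0, r2) \<Longrightarrow> m2 \<in> V (r1, q0)
   \<Longrightarrow> F (p0, r2) (r1, r2) m1 + F (r1, q0) (r1, r2) m2 \<in> N r1 r2"
  unfolding N_def mem_Collect_eq
  by (rule exI[of _ p0], rule exI[of _ q0], rule exI[of _ m1], rule exI[of _ m2]) simp

lemma N_E: "v \<in> N r1 r2 \<Longrightarrow> \<exists>p0 q0 m1 m2. x \<le> p0 \<and> p0 \<notin> J1 \<and> y \<le> q0 \<and> q0 \<notin> J2 \<and> m1 \<in> V (p0, r2) \<and> m2 \<in> V (r1, q0)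
   \<and> v = F (p0, r2) (r1, r2) m1 + F (r1, q0) (r1, r2) m2"
  unfolding N_def mem_Collect_eq by (elim exE conjE) (intro exI conjI, assumption+)

lemma notJ1: "p \<notin> J1 \<Longrightarrow> p < x'" unfolding J1_def by auto
lemma notJ2: "q \<notin> J2 \<Longrightarrow> q < y'" unfolding J2_def by auto
lemma xJ1: "x \<notin> J1" using J1_gt[of x] by auto
lemma yJ2: "y \<notin> J2" using J2_gt[of y] by auto

lemma N_sub: assumes "x' \<le> r1" "y' \<le> r2" shows "vs.subspace (N r1 r2)" "N r1 r2 \<subseteq> V (r1, r2)"
proof -
  have ht: "(r1, r2) \<in> HP" using HPI assms sq nondeg by auto
  have gen: "F (p0, r2) (r1, r2) m1 + F (r1, q0) (r1, r2) m2 \<in> V (r1, r2)"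
    if "x \<le> p0" "p0 \<notin> J1" "y \<le> q0" "q0 \<notin> J2" "m1 \<in> V (p0, r2)" "m2 \<in> V (r1, q0)" for p0 q0 m1 m2
  proof -
    have h: "(p0, r2) \<in> HP" "(r1, q0) \<in> HP" using HPI that assms sq nondeg notJ1[OF that(2)] by auto
    have le: "(p0, r2) \<le> (r1, r2)" "(r1, q0) \<le> (r1, r2)" using that assms notJ1[OF that(2)] notJ2[OF that(4)] by auto
    show ?thesis using vs.subspace_add[OF sub[OF ht] Fin[OF h(1) ht le(1) that(5)] Fin[OF h(2) ht le(2) that(6)]] .
  qed
  show "N r1 r2 \<subseteq> V (r1, r2)"
  proof
    fix v assume "v \<in> N r1 r2"
    from N_E[OF this] obtain p0 q0 m1 m2 where "x \<le> p0" "p0 \<notin> J1" "y \<le> q0" "q0 \<notin> J2" "m1 \<in> V (p0, r2)" "m2 \<in> V (r1, q0)"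
      "v = F (p0, r2) (r1, r2) m1 + F (r1, q0) (r1, r2) m2" by blast
    thus "v \<in> V (r1, r2)" using gen by simp
  qed
  show "vs.subspace (N r1 r2)"
  proof (rule vs.subspaceI)
    have h: "(x, r2) \<in> HP" "(r1, y) \<in> HP" using HPI assms sq nondeg by auto
    have le: "(x, r2) \<le> (r1, r2)" "(r1, y) \<le> (r1, r2)" using assms sq nondeg by auto
    have "F (x, r2) (r1, r2) 0 + F (r1, y) (r1, r2) 0 = 0" using F0[OF h(1) ht le(1)] F0[OF h(2) ht le(2)] by simp
    thus "0 \<in> N r1 r2" using N_I[OF order_refl xJ1 order_refl yJ2 vs.subspace_0[OF sub[OF h(1)]] vs.subspace_0[OF sub[OF h(2)]]]
      by simp
  next
    fix v v' assume vv: "v \<in> N r1 r2" "v' \<in> N r1 r2"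
    obtain p0 q0 m1 m2 where A: "x \<le> p0" "p0 \<notin> J1" "y \<le> q0" "q0 \<notin> J2" "m1 \<in> V (p0, r2)" "m2 \<in> V (r1, q0)"
      "v = F (p0, r2) (r1, r2) m1 + F (r1, q0) (r1, r2) m2" using N_E[OF vv(1)] by blast
    obtain p0' q0' m1' m2' where B: "x \<le> p0'" "p0' \<notin> J1" "y \<le> q0'" "q0' \<notin> J2" "m1' \<in> V (p0', r2)" "m2' \<in> V (r1, q0')"
      "v' = F (p0', r2) (r1, r2) m1' + F (r1, q0') (r1, r2) m2'"
      using N_E[OF vv(2)] by blast
    define P where "P = max p0 p0'"
    define Q where "Q = max q0 q0'"
    have PJ: "P \<notin> J1" unfolding P_def using A(2) B(2) by (simp add: max_def)
    have QJ: "Q \<notin> J2" unfolding Q_def using A(4) B(4) by (simp add: max_def)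
    have PQ: "x \<le> P" "y \<le> Q" "p0 \<le> P" "p0' \<le> P" "q0 \<le> Q" "q0' \<le> Q" unfolding P_def Q_def using A B by auto
    have hP: "(p0, r2) \<in> HP" "(p0', r2) \<in> HP" "(P, r2) \<in> HP" "(r1, q0) \<in> HP" "(r1, q0') \<in> HP" "(r1, Q) \<in> HP"
      using HPI A B PQ assms sq nondeg notJ1[OF PJ] by auto
    have le: "(p0, r2) \<le> (P, r2)" "(p0', r2) \<le> (P, r2)" "(P, r2) \<le> (r1, r2)" "(r1, q0) \<le> (r1, Q)" "(r1, q0') \<le> (r1, Q)" "(r1, Q) \<le> (r1, r2)"
      using PQ notJ1[OF PJ] notJ2[OF QJ] assms by auto
    define u where "u = F (p0, r2) (P, r2) m1 + F (p0', r2) (P, r2) m1'"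
    define w where "w = F (r1, q0) (r1, Q) m2 + F (r1, q0') (r1, Q) m2'"
    have uV: "u \<in> V (P, r2)" unfolding u_def using vs.subspace_add[OF sub[OF hP(3)] Fin[OF hP(1,3) le(1) A(5)] Fin[OF hP(2,3) le(2) B(5)]] .
    have wV: "w \<in> V (r1, Q)" unfolding w_def using vs.subspace_add[OF sub[OF hP(6)] Fin[OF hP(4,6) le(4) A(6)] Fin[OF hP(5,6) le(5) B(6)]] .
    have "F (P, r2) (r1, r2) u = F (p0, r2) (r1, r2) m1 + F (p0', r2) (r1, r2) m1'"
      unfolding u_def Fadd[OF hP(3) ht le(3) Fin[OF hP(1,3) le(1) A(5)] Fin[OF hP(2,3) le(2) B(5)]]
        Fcomp[OF hP(1,3) ht le(1,3) A(5)] Fcomp[OF hP(2,3) ht le(2,3) B(5)] ..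
    moreover have "F (r1, Q) (r1, r2) w = F (r1, q0) (r1, r2) m2 + F (r1, q0') (r1, r2) m2'"
      unfolding w_def Fadd[OF hP(6) ht le(6) Fin[OF hP(4,6) le(4) A(6)] Fin[OF hP(5,6) le(5) B(6)]]
        Fcomp[OF hP(4,6) ht le(4,6) A(6)] Fcomp[OF hP(5,6) ht le(5,6) B(6)] ..
    ultimately have "v + v' = F (P, r2) (r1, r2) u + F (r1, Q) (r1, r2) w" unfolding A(7) B(7) by (simp add: algebra_simps)
    thus "v + v' \<in> N r1 r2" using N_I[OF PQ(1) PJ PQ(2) QJ uV wV] by simp
  next
    fix c v assume vv: "v \<in> N r1 r2"
    obtain p0 q0 m1 m2 where A: "x \<le> p0" "p0 \<notin> J1" "y \<le> q0" "q0 \<notin> J2" "m1 \<in> V (p0, r2)" "m2 \<in> V (r1, q0)"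
      "v = F (p0, r2) (r1, r2) m1 + F (r1, q0) (r1, r2) m2"
      using N_E[OF vv] by blast
    have h: "(p0, r2) \<in> HP" "(r1, q0) \<in> HP" using HPI A assms sq nondeg notJ1[OF A(2)] by auto
    have le: "(p0, r2) \<le> (r1, r2)" "(r1, q0) \<le> (r1, r2)" using A assms notJ1[OF A(2)] notJ2[OF A(4)] by auto
    have "sc c v = F (p0, r2) (r1, r2) (sc c m1) + F (r1, q0) (r1, r2) (sc c m2)"
      unfolding A(7) Fscale[OF h(1) ht le(1) A(5)] Fscale[OF h(2) ht le(2) A(6)] by (simp add: vs.scale_right_distrib)
    thus "sc c v \<in> N r1 r2" using N_I[OF A(1-4) vs.subspace_scale[OF sub[OF h(1)] A(5)] vs.subspace_scale[OF sub[OF h(2)] A(6)]]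
      by simp
  qed
qed

lemma N_out:
  assumes "x' \<le> r1" "y' \<le> r2" "s \<in> HP" "s \<le> (r1, r2)" "s \<notin> J1 \<times> J2" "m \<in> V s"
  shows "F s (r1, r2) m \<in> N r1 r2"
proof -
  obtain s1 s2 where s: "s = (s1, s2)" by (cases s)
  have ht: "(r1, r2) \<in> HP" using HPI assms sq nondeg by auto
  show ?thesis
  proof (cases "s1 \<in> J1")
    case False
    define p0 where "p0 = max s1 x"
    have p0J: "p0 \<notin> J1" unfolding p0_def using False xJ1 by (simp add: max_def)
    have h: "(p0, r2) \<in> HP" "(r1, y) \<in> HP" using HPI assms sq nondeg unfolding p0_def by auto
    have le: "s \<le> (p0, r2)" "(p0, r2) \<le> (r1, r2)" "(r1, y) \<le> (r1, r2)"
      using assms(4) notJ1[OF p0J] assms sq nondeg unfolding s p0_def by auto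
    have "F s (r1, r2) m = F (p0, r2) (r1, r2) (F s (p0, r2) m) + F (r1, y) (r1, r2) 0"
      using Fcomp[OF assms(3) h(1) ht le(1,2) assms(6)] F0[OF h(2) ht le(3)] by simp
    moreover have "x \<le> p0" unfolding p0_def by simp
    ultimately show ?thesis using N_I[OF _ p0J order_refl yJ2 Fin[OF assms(3) h(1) le(1) assms(6)] vs.subspace_0[OF sub[OF h(2)]]]
      by simp
  next
    case True
    hence s2J: "s2 \<notin> J2" using assms(5) s by auto
    define q0 where "q0 = max s2 y"
    have q0J: "q0 \<notin> J2" unfolding q0_def using s2J yJ2 by (simp add: max_def)
    have h: "(r1, q0) \<in> HP" "(x, r2) \<in> HP" using HPI assms sq nondeg unfolding q0_def by auto
    have le: "s \<le> (r1, q0)" "(r1, q0) \<le> (r1, r2)" "(x, r2) \<le> (r1, r2)"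
      using assms(4) notJ2[OF q0J] assms sq nondeg unfolding s q0_def by auto
    have "F s (r1, r2) m = F (x, r2) (r1, r2) 0 + F (r1, q0) (r1, r2) (F s (r1, q0) m)"
      using Fcomp[OF assms(3) h(1) ht le(1,2) assms(6)] F0[OF h(2) ht le(3)] by simp
    moreover have "y \<le> q0" unfolding q0_def by simp
    ultimately show ?thesis using N_I[OF order_refl xJ1 _ q0J vs.subspace_0[OF sub[OF h(2)]] Fin[OF assms(3) h(1) le(1) assms(6)]]
      by simp
  qed
qed

end



context mx begin

interpretation vs: vector_space sc by (rule pmD(1))

lemma Pre_J1: "x \<le> p \<Longrightarrow> p \<notin> J1 \<Longrightarrow> Pre (p, y') \<subseteq> I x' y'"
  using J1_iff[of p] notJ1[of p] by auto

lemma Pre_J2: "y \<le> q \<Longrightarrow> q \<notin> J2 \<Longrightarrow> Pre (x', q) \<inter> Pst \<subseteq> I x' y'"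
  using J2_iff[of q] notJ2[of q] by auto

lemma Avoid_aux:
  assumes "x' \<le> r1" "y' \<le> r2" "x \<le> p0" "p0 \<notin> J1" "y \<le> q0" "q0 \<notin> J2" "m1 \<in> V (p0, r2)" "m2 \<in> V (r1, q0)"
    and eq: "F (x', y') (r1, r2) z0 = F (p0, r2) (r1, r2) m1 + F (r1, q0) (r1, r2) m2"
  shows False
proof -
  have p0x: "p0 \<le> x'" using notJ1[OF assms(4)] by simp
  have q0y: "q0 \<le> y'" using notJ2[OF assms(6)] by simp
  note nd = nondeg sq
  have h: "(x', y') \<in> HP" "(r1, r2) \<in> HP" "(p0, r2) \<in> HP" "(r1, q0) \<in> HP" "(x', r2) \<in> HP" "(x', q0) \<in> HP"
    "(p0, y') \<in> HP"
    using HPI assms p0x q0y nd by auto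
  have le: "(x', y') \<le> (x', r2)" "(p0, r2) \<le> (x', r2)" "(x', r2) \<le> (r1, r2)" "(r1, q0) \<le> (r1, r2)"
    "(x', q0) \<le> (x', y')" "(x', q0) \<le> (x', r2)" "(p0, y') \<le> (x', y')" "(x', y') \<le> (r1, r2)" "(p0, r2) \<le> (r1, r2)"
    using assms p0x q0y by auto
  note z0V = z0_props(3)
  define g where "g = (x', r2)"
  define n where "n = F (x', y') (x', r2) z0 - F (p0, r2) (x', r2) m1"
  have Fz0g: "F (x', y') (x', r2) z0 \<in> V (x', r2)" using Fin[OF h(1,5) le(1) z0V] .
  have Fm1g: "F (p0, r2) (x', r2) m1 \<in> V (x', r2)" using Fin[OF h(3,5) le(2) assms(7)] .
  have nV: "n \<in> V (x', r2)" unfolding n_def using vs.subspace_diff[OF sub[OF h(5)] Fz0g Fm1g] .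
  have Fn: "F (x', r2) (r1, r2) n = F (r1, q0) (r1, r2) m2"
    unfolding n_def Fdiff[OF h(5,2) le(3) Fz0g Fm1g] Fcomp[OF h(1,5,2) le(1,3) z0V] Fcomp[OF h(3,5,2) le(2,3) assms(7)]
    using eq by simp
  have I12: "vs.subspace (I r1 r2)" using I_sub(1)[of r1 r2] assms nd by simp
  have "F (r1, q0) (r1, r2) m2 - F (x', r2) (r1, r2) n \<in> I r1 r2" using Fn vs.subspace_0[OF I12] by simp
  then obtain e where e: "e \<in> V (min r1 x', min q0 r2)"
    "F (min r1 x', min q0 r2) (r1, r2) e - F (r1, q0) (r1, r2) m2 \<in> I r1 r2"
    using Kint[of r1 q0 x' r2 r1 r2 m2 n] assms nd q0y nV by auto
  have mins: "min r1 x' = x'" "min q0 r2 = q0" using assms q0y by auto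
  have eV: "e \<in> V (x', q0)" using e(1) unfolding mins .
  have e2: "F (x', q0) (r1, r2) e - F (x', r2) (r1, r2) n \<in> I r1 r2" using e(2) unfolding mins Fn .
  have Feg: "F (x', q0) (x', r2) e \<in> V (x', r2)" using Fin[OF h(6,5) le(6) eV] .
  have "F (x', r2) (r1, r2) (F (x', q0) (x', r2) e - n) = F (x', q0) (r1, r2) e - F (x', r2) (r1, r2) n"
    unfolding Fdiff[OF h(5,2) le(3) Feg nV] Fcomp[OF h(6,5,2) le(6,3) eV] ..
  hence "F (x', r2) (r1, r2) (F (x', q0) (x', r2) e - n) \<in> I r1 r2" using e2 by simp
  hence A1: "F (x', q0) (x', r2) e - n \<in> I x' r2"
    using Kinj[of x' r1 r2 r2 "F (x', q0) (x', r2) e - n"] assms nd vs.subspace_diff[OF sub[OF h(5)] Feg nV] by simp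
  define z1 where "z1 = z0 - F (x', q0) (x', y') e"
  have Fed: "F (x', q0) (x', y') e \<in> V (x', y')" using Fin[OF h(6,1) le(5) eV] .
  have z1V: "z1 \<in> V (x', y')" unfolding z1_def using vs.subspace_diff[OF sub[OF h(1)] z0V Fed] .
  have "F (x', y') (x', r2) z1 - F (p0, r2) (x', r2) m1 = n - F (x', q0) (x', r2) e"
    unfolding z1_def n_def Fdiff[OF h(1,5) le(1) z0V Fed] Fcomp[OF h(6,1,5) le(5,1) eV] by simp
  also have "\<dots> = - (F (x', q0) (x', r2) e - n)" by simp
  finally have "F (x', y') (x', r2) z1 - F (p0, r2) (x', r2) m1 \<in> I x' r2"
    using vs.subspace_neg[OF I_sub(1)[of x' r2] A1] assms nd by simp
  then obtain e' where e': "e' \<in> V (min x' p0, min y' r2)"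
    "F (min x' p0, min y' r2) (x', r2) e' - F (x', y') (x', r2) z1 \<in> I x' r2"
    using Kint[of x' y' p0 r2 x' r2 z1 m1] assms nd p0x z1V by auto
  have mins2: "min x' p0 = p0" "min y' r2 = y'" using assms p0x by auto
  have e'V: "e' \<in> V (p0, y')" using e'(1) unfolding mins2 .
  have Fe'd: "F (p0, y') (x', y') e' \<in> V (x', y')" using Fin[OF h(7,1) le(7) e'V] .
  have "F (x', y') (x', r2) (F (p0, y') (x', y') e' - z1) = F (p0, y') (x', r2) e' - F (x', y') (x', r2) z1"
    unfolding Fdiff[OF h(1,5) le(1) Fe'd z1V] Fcomp[OF h(7,1,5) le(7,1) e'V] ..
  hence "F (x', y') (x', r2) (F (p0, y') (x', y') e' - z1) \<in> I x' r2" using e'(2) unfolding mins2 by simp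
  hence A2: "F (p0, y') (x', y') e' - z1 \<in> I x' y'"
    using Kinj[of x' x' y' r2 "F (p0, y') (x', y') e' - z1"] assms nd vs.subspace_diff[OF sub[OF h(1)] Fe'd z1V] by simp
  have "z1 - F (p0, y') (x', y') e' \<in> I x' y'"
    using vs.subspace_neg[OF Id_sub(1) A2] by simp
  hence "z1 \<in> Pre (p0, y')" unfolding Pre_def using z1V e'V by blast
  hence z1I: "z1 \<in> I x' y'" using Pre_J1[OF assms(3,4)] by blast
  have "z0 - F (x', q0) (x', y') e \<in> I x' y'" using z1I unfolding z1_def .
  hence "z0 \<in> Pre (x', q0)" unfolding Pre_def using z0V eV by blast
  hence "z0 \<in> I x' y'" using Pre_J2[OF assms(5,6)] z0_props(4) by blast
  thus False using z0_props(2) by simp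
qed

lemma Avoid: assumes "x' \<le> r1" "y' \<le> r2" shows "F (x', y') (r1, r2) z0 \<notin> N r1 r2"
proof
  assume "F (x', y') (r1, r2) z0 \<in> N r1 r2"
  from N_E[OF this] obtain p0 q0 m1 m2 where "x \<le> p0" "p0 \<notin> J1" "y \<le> q0" "q0 \<notin> J2" "m1 \<in> V (p0, r2)" "m2 \<in> V (r1, q0)"
    "F (x', y') (r1, r2) z0 = F (p0, r2) (r1, r2) m1 + F (r1, q0) (r1, r2) m2" by blast
  from Avoid_aux[OF assms this] show False .
qed

end



context mx begin

interpretation vs: vector_space sc by (rule pmD(1))

definition Tn :: "nat \<Rightarrow> real \<times> real" where "Tn n = (x' + real n, y' + real n)"

lemma Tn_HP: "Tn n \<in> HP" unfolding Tn_def using HPI nondeg sq by auto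
lemma Tn_mono: "n \<le> k \<Longrightarrow> Tn n \<le> Tn k" unfolding Tn_def by auto
lemma d_Tn: "(x', y') \<le> Tn n" unfolding Tn_def by auto
lemma Tn0: "Tn 0 = (x', y')" unfolding Tn_def by simp

abbreviation NT :: "nat \<Rightarrow> 'v set" where "NT n \<equiv> N (fst (Tn n)) (snd (Tn n))"

lemma NT_sub: "vs.subspace (NT n)" "NT n \<subseteq> V (Tn n)"
  using N_sub[of "fst (Tn n)" "snd (Tn n)"] unfolding Tn_def by auto

lemma NT_out: "s \<in> HP \<Longrightarrow> s \<le> Tn n \<Longrightarrow> s \<notin> J1 \<times> J2 \<Longrightarrow> m \<in> V s \<Longrightarrow> F s (Tn n) m \<in> NT n"
  using N_out[of "fst (Tn n)" "snd (Tn n)" s m] unfolding Tn_def by auto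

lemma NT_map: assumes "n \<le> k" "m \<in> NT n" shows "F (Tn n) (Tn k) m \<in> NT k"
proof -
  from N_E[OF assms(2)] obtain p0 q0 m1 m2 where A: "x \<le> p0" "p0 \<notin> J1" "y \<le> q0" "q0 \<notin> J2"
    "m1 \<in> V (p0, snd (Tn n))" "m2 \<in> V (fst (Tn n), q0)"
    "m = F (p0, snd (Tn n)) (fst (Tn n), snd (Tn n)) m1 + F (fst (Tn n), q0) (fst (Tn n), snd (Tn n)) m2" by blast
  have TT: "(fst (Tn n), snd (Tn n)) = Tn n" by simp
  have h: "(p0, snd (Tn n)) \<in> HP" "(fst (Tn n), q0) \<in> HP" using HPI A sq nondeg unfolding Tn_def by auto
  have le: "(p0, snd (Tn n)) \<le> Tn n" "(fst (Tn n), q0) \<le> Tn n" using notJ1[OF A(2)] notJ2[OF A(4)] unfolding Tn_def by auto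
  have le2: "Tn n \<le> Tn k" using Tn_mono[OF assms(1)] .
  have F1: "F (p0, snd (Tn n)) (Tn n) m1 \<in> V (Tn n)" using Fin[OF h(1) Tn_HP le(1) A(5)] .
  have F2: "F (fst (Tn n), q0) (Tn n) m2 \<in> V (Tn n)" using Fin[OF h(2) Tn_HP le(2) A(6)] .
  have "F (Tn n) (Tn k) m = F (p0, snd (Tn n)) (Tn k) m1 + F (fst (Tn n), q0) (Tn k) m2"
    unfolding A(7) TT Fadd[OF Tn_HP Tn_HP le2 F1 F2] Fcomp[OF h(1) Tn_HP Tn_HP le(1) le2 A(5)] Fcomp[OF h(2) Tn_HP Tn_HP le(2) le2 A(6)] ..
  moreover have "F (p0, snd (Tn n)) (Tn k) m1 \<in> NT k"
    using NT_out[OF h(1) order.trans[OF le(1) le2] _ A(5)] A(2) by auto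
  moreover have "F (fst (Tn n), q0) (Tn k) m2 \<in> NT k"
    using NT_out[OF h(2) order.trans[OF le(2) le2] _ A(6)] A(4) by auto
  ultimately show ?thesis using vs.subspace_add[OF NT_sub(1)] by simp
qed

lemma zT: "F (x', y') (Tn n) z0 \<in> V (Tn n)" "F (x', y') (Tn n) z0 \<notin> NT n"
proof -
  have hd: "(x', y') \<in> HP" using HPI sq nondeg by auto
  show "F (x', y') (Tn n) z0 \<in> V (Tn n)" using Fin[OF hd Tn_HP d_Tn z0_props(3)] .
  show "F (x', y') (Tn n) z0 \<notin> NT n" using Avoid[of "fst (Tn n)" "snd (Tn n)"] unfolding Tn_def by auto
qed

definition Phi :: "nat \<Rightarrow> ('v \<Rightarrow> 'k) set" where
  "Phi n = {f. lin_on sc (*) (V (Tn n)) f \<and> (\<forall>m\<in>NT n. f m = 0) \<and> f (F (x', y') (Tn n) z0) = 1 \<and> (\<forall>m. m \<notin> V (Tn n) \<longrightarrow> f m = 0)}"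

definition hres :: "nat \<Rightarrow> nat \<Rightarrow> ('v \<Rightarrow> 'k) \<Rightarrow> ('v \<Rightarrow> 'k)" where
  "hres n k f = (\<lambda>m. if m \<in> V (Tn n) then f (F (Tn n) (Tn k) m) else 0)"

lemma hres_maps: assumes "n \<le> k" "f \<in> Phi k" shows "hres n k f \<in> Phi n"
proof -
  have le: "Tn n \<le> Tn k" using Tn_mono[OF assms(1)] .
  have f: "lin_on sc (*) (V (Tn k)) f" "\<forall>m\<in>NT k. f m = 0" "f (F (x', y') (Tn k) z0) = 1"
    using assms(2) unfolding Phi_def by auto
  have S: "vs.subspace (V (Tn n))" using sub[OF Tn_HP] .
  have "lin_on sc (*) (V (Tn n)) (hres n k f)"
    unfolding lin_on_def hres_def
  proof (intro conjI ballI allI)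
    fix a b assume ab: "a \<in> V (Tn n)" "b \<in> V (Tn n)"
    show "(if a + b \<in> V (Tn n) then f (F (Tn n) (Tn k) (a + b)) else 0) =
      (if a \<in> V (Tn n) then f (F (Tn n) (Tn k) a) else 0) + (if b \<in> V (Tn n) then f (F (Tn n) (Tn k) b) else 0)"
      using ab vs.subspace_add[OF S ab] Fadd[OF Tn_HP Tn_HP le ab] f(1) Fin[OF Tn_HP Tn_HP le] unfolding lin_on_def by simp
  next
    fix c a assume a: "a \<in> V (Tn n)"
    show "(if sc c a \<in> V (Tn n) then f (F (Tn n) (Tn k) (sc c a)) else 0) = c * (if a \<in> V (Tn n) then f (F (Tn n) (Tn k) a) else 0)"
      using a vs.subspace_scale[OF S a] Fscale[OF Tn_HP Tn_HP le a] f(1) Fin[OF Tn_HP Tn_HP le a] unfolding lin_on_def by simp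
  qed
  moreover have "\<forall>m\<in>NT n. hres n k f m = 0"
    using NT_map[OF assms(1)] f(2) NT_sub(2) unfolding hres_def by auto
  moreover have "hres n k f (F (x', y') (Tn n) z0) = 1"
  proof -
    have hd: "(x', y') \<in> HP" using HPI sq nondeg by auto
    have "F (Tn n) (Tn k) (F (x', y') (Tn n) z0) = F (x', y') (Tn k) z0"
      using Fcomp[OF hd Tn_HP Tn_HP d_Tn le z0_props(3)] .
    thus ?thesis unfolding hres_def using zT(1) f(3) by simp
  qed
  moreover have "\<forall>m. m \<notin> V (Tn n) \<longrightarrow> hres n k f m = 0" unfolding hres_def by simp
  ultimately show ?thesis unfolding Phi_def by blast
qed

lemma hres_comp: assumes "n \<le> k" "k \<le> l" shows "hres n k (hres k l f) = hres n l f"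
proof
  fix m
  have le: "Tn n \<le> Tn k" "Tn k \<le> Tn l" using Tn_mono assms by auto
  show "hres n k (hres k l f) m = hres n l f m"
    unfolding hres_def using Fin[OF Tn_HP Tn_HP le(1)] Fcomp[OF Tn_HP Tn_HP Tn_HP le] by simp
qed

lemma hres_refl: "f \<in> Phi n \<Longrightarrow> hres n n f = f"
proof
  fix m assume "f \<in> Phi n"
  thus "hres n n f m = f m" unfolding hres_def Phi_def using Fid[OF Tn_HP] by auto
qed

lemma Phi_ne: "Phi n \<noteq> {}"
proof -
  obtain f :: "'v \<Rightarrow> 'k" where f: "\<forall>a b. f (a + b) = f a + f b" "\<forall>c a. f (sc c a) = c * f a"
    "f (F (x', y') (Tn n) z0) = 1" "\<forall>a\<in>NT n. f a = 0"
    using vs.separate[OF NT_sub(1) zT(2)] by blast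
  define g where "g m = (if m \<in> V (Tn n) then f m else 0)" for m
  have S: "vs.subspace (V (Tn n))" using sub[OF Tn_HP] .
  have "g \<in> Phi n" unfolding Phi_def lin_on_def g_def
    using f zT(1) NT_sub(2) vs.subspace_add[OF S] vs.subspace_scale[OF S] by auto
  thus ?thesis by blast
qed

end



context mx begin

interpretation vs: vector_space sc by (rule pmD(1))

definition An :: "nat \<Rightarrow> nat \<Rightarrow> 'v set" where "An n k = {m \<in> V (Tn n). F (Tn n) (Tn k) m \<in> NT k}"

lemma An_sub: assumes "n \<le> k" shows "vs.subspace (An n k)"
proof -
  have le: "Tn n \<le> Tn k" using Tn_mono[OF assms] .
  have S: "vs.subspace (V (Tn n))" using sub[OF Tn_HP] .
  show ?thesis
  proof (rule vs.subspaceI)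
    show "0 \<in> An n k" unfolding An_def using vs.subspace_0[OF S] F0[OF Tn_HP Tn_HP le] vs.subspace_0[OF NT_sub(1)] by simp
  next
    fix a b assume "a \<in> An n k" "b \<in> An n k"
    hence ab: "a \<in> V (Tn n)" "b \<in> V (Tn n)" "F (Tn n) (Tn k) a \<in> NT k" "F (Tn n) (Tn k) b \<in> NT k" unfolding An_def by auto
    show "a + b \<in> An n k" unfolding An_def using vs.subspace_add[OF S ab(1,2)] Fadd[OF Tn_HP Tn_HP le ab(1,2)]
      vs.subspace_add[OF NT_sub(1) ab(3,4)] by simp
  next
    fix c a assume "a \<in> An n k"
    hence a: "a \<in> V (Tn n)" "F (Tn n) (Tn k) a \<in> NT k" unfolding An_def by auto
    show "sc c a \<in> An n k" unfolding An_def using vs.subspace_scale[OF S a(1)] Fscale[OF Tn_HP Tn_HP le a(1)]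
      vs.subspace_scale[OF NT_sub(1) a(2)] by simp
  qed
qed

lemma An_mono: assumes "n \<le> k" "k \<le> k'" shows "An n k \<subseteq> An n k'"
proof
  fix m assume "m \<in> An n k"
  hence m: "m \<in> V (Tn n)" "F (Tn n) (Tn k) m \<in> NT k" unfolding An_def by auto
  have "F (Tn k) (Tn k') (F (Tn n) (Tn k) m) \<in> NT k'" using NT_map[OF assms(2) m(2)] .
  moreover have "F (Tn k) (Tn k') (F (Tn n) (Tn k) m) = F (Tn n) (Tn k') m"
    using Fcomp[OF Tn_HP Tn_HP Tn_HP Tn_mono[OF assms(1)] Tn_mono[OF assms(2)] m(1)] .
  ultimately show "m \<in> An n k'" unfolding An_def using m(1) by simp
qed

lemma img_char: assumes "n \<le> k" shows "hres n k ` Phi k = {f \<in> Phi n. \<forall>m\<in>An n k. f m = 0}"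
proof
  show "hres n k ` Phi k \<subseteq> {f \<in> Phi n. \<forall>m\<in>An n k. f m = 0}"
  proof
    fix f assume "f \<in> hres n k ` Phi k"
    then obtain g where g: "g \<in> Phi k" "f = hres n k g" by blast
    have "\<forall>m\<in>An n k. f m = 0" unfolding g(2) hres_def An_def using g(1) unfolding Phi_def by auto
    thus "f \<in> {f \<in> Phi n. \<forall>m\<in>An n k. f m = 0}" using hres_maps[OF assms g(1)] g(2) by simp
  qed
  show "{f \<in> Phi n. \<forall>m\<in>An n k. f m = 0} \<subseteq> hres n k ` Phi k"
  proof
    fix f assume "f \<in> {f \<in> Phi n. \<forall>m\<in>An n k. f m = 0}"
    hence f: "lin_on sc (*) (V (Tn n)) f" "f (F (x', y') (Tn n) z0) = 1" "\<forall>m. m \<notin> V (Tn n) \<longrightarrow> f m = 0"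
      "\<forall>m\<in>An n k. f m = 0" unfolding Phi_def by auto
    have le: "Tn n \<le> Tn k" using Tn_mono[OF assms] .
    have Ga: "\<forall>m\<in>V (Tn n). \<forall>m'\<in>V (Tn n). F (Tn n) (Tn k) (m + m') = F (Tn n) (Tn k) m + F (Tn n) (Tn k) m'"
      using Fadd[OF Tn_HP Tn_HP le] by blast
    have Gs: "\<forall>c. \<forall>m\<in>V (Tn n). F (Tn n) (Tn k) (sc c m) = sc c (F (Tn n) (Tn k) m)"
      using Fscale[OF Tn_HP Tn_HP le] by blast
    have fa: "\<forall>m\<in>V (Tn n). \<forall>m'\<in>V (Tn n). f (m + m') = f m + f m'" using f(1) unfolding lin_on_def by blast
    have fs: "\<forall>c. \<forall>m\<in>V (Tn n). f (sc c m) = c * f m" using f(1) unfolding lin_on_def by blast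
    have fk: "\<forall>m\<in>V (Tn n). F (Tn n) (Tn k) m \<in> NT k \<longrightarrow> f m = 0" using f(4) unfolding An_def by blast
    obtain f' :: "'v \<Rightarrow> 'k" where f': "\<forall>a b. f' (a + b) = f' a + f' b" "\<forall>c a. f' (sc c a) = c * f' a"
      "\<forall>m\<in>V (Tn n). f' (F (Tn n) (Tn k) m) = f m" "\<forall>a\<in>NT k. f' a = 0"
      using vs.qext[OF sub[OF Tn_HP] NT_sub(1) Ga Gs fa fs fk] by blast
    define g where "g m = (if m \<in> V (Tn k) then f' m else 0)" for m
    have Sk: "vs.subspace (V (Tn k))" using sub[OF Tn_HP] .
    have hd: "(x', y') \<in> HP" using HPI sq nondeg by auto
    have "F (x', y') (Tn k) z0 = F (Tn n) (Tn k) (F (x', y') (Tn n) z0)"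
      using Fcomp[OF hd Tn_HP Tn_HP d_Tn le z0_props(3)] by simp
    hence g1: "g (F (x', y') (Tn k) z0) = 1" unfolding g_def using zT(1)[of k] f'(3) zT(1)[of n] f(2) by simp
    have "g \<in> Phi k" unfolding Phi_def
    proof (intro CollectI conjI allI impI ballI)
      show "lin_on sc (*) (V (Tn k)) g" unfolding lin_on_def g_def
        using f'(1,2) vs.subspace_add[OF Sk] vs.subspace_scale[OF Sk] by simp
      show "\<And>m. m \<in> NT k \<Longrightarrow> g m = 0" unfolding g_def using f'(4) NT_sub(2) by auto
      show "g (F (x', y') (Tn k) z0) = 1" by (rule g1)
      show "\<And>m. m \<notin> V (Tn k) \<Longrightarrow> g m = 0" unfolding g_def by simp
    qed
    moreover have "hres n k g = f"
    proof
      fix m show "hres n k g m = f m"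
        unfolding hres_def g_def using f'(3) f(3) Fin[OF Tn_HP Tn_HP le] by auto
    qed
    ultimately show "f \<in> hres n k ` Phi k" by blast
  qed
qed

lemma stab: "\<exists>k0\<ge>n. \<forall>k\<ge>k0. hres n k ` Phi k = hres n k0 ` Phi k0"
proof -
  obtain W where W: "finite W" "W \<subseteq> V (Tn n)" "vs.span W = V (Tn n)" using findim[OF Tn_HP] by blast
  have dimb: "vs.dim (An n k) \<le> card W" for k
    using vs.dim_le_card[OF _ W(1), of "An n k"] W(3) unfolding An_def by blast
  obtain k0 where k0: "k0 \<ge> n" "\<forall>k. k \<ge> n \<longrightarrow> card W - vs.dim (An n k0) \<le> card W - vs.dim (An n k)"
    using ex_has_least_nat[of "\<lambda>k. k \<ge> n" n "\<lambda>k. card W - vs.dim (An n k)"] by blast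
  have Aeq: "An n k = An n k0" if "k \<ge> k0" for k
  proof -
    have sub1: "An n k0 \<subseteq> An n k" using An_mono[OF k0(1) that] .
    have "vs.dim (An n k) \<le> vs.dim (An n k0)" using k0(2)[rule_format, of k] that k0(1) dimb[of k] dimb[of k0] by simp
    moreover have "An n k \<subseteq> vs.span W" using W(3) unfolding An_def by blast
    ultimately show ?thesis
      using vs.dim_eq_sub[OF An_sub[OF k0(1)] An_sub[of n k] sub1 _ W(1)] k0(1) that by simp
  qed
  have "\<forall>k\<ge>k0. hres n k ` Phi k = hres n k0 ` Phi k0"
  proof (intro allI impI)
    fix k assume k: "k \<ge> k0"
    have "hres n k ` Phi k = {f \<in> Phi n. \<forall>m\<in>An n k. f m = 0}" using img_char[of n k] k k0(1) by simp
    also have "\<dots> = {f \<in> Phi n. \<forall>m\<in>An n k0. f m = 0}" unfolding Aeq[OF k] ..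
    also have "\<dots> = hres n k0 ` Phi k0" using img_char[of n k0] k0(1) by simp
    finally show "hres n k ` Phi k = hres n k0 ` Phi k0" .
  qed
  thus ?thesis using k0(1) by blast
qed

lemma fsel_ex: "\<exists>sel. \<forall>n. sel n \<in> Phi n \<and> hres n (Suc n) (sel (Suc n)) = sel n"
proof (rule mittag_thread[where h=hres and X=Phi])
  show "\<And>n k x. n \<le> k \<Longrightarrow> x \<in> Phi k \<Longrightarrow> hres n k x \<in> Phi n" by (rule hres_maps)
  show "\<And>n k l x. n \<le> k \<Longrightarrow> k \<le> l \<Longrightarrow> x \<in> Phi l \<Longrightarrow> hres n k (hres k l x) = hres n l x" by (rule hres_comp)
  show "\<And>n. Phi n \<noteq> {}" by (rule Phi_ne)
  show "\<And>n. \<exists>k0\<ge>n. \<forall>k\<ge>k0. hres n k ` Phi k = hres n k0 ` Phi k0" by (rule stab)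
qed

definition fsel :: "nat \<Rightarrow> 'v \<Rightarrow> 'k" where
  "fsel = (SOME sel. \<forall>n. sel n \<in> Phi n \<and> hres n (Suc n) (sel (Suc n)) = sel n)"

lemma fsel: "\<forall>n. fsel n \<in> Phi n \<and> hres n (Suc n) (fsel (Suc n)) = fsel n"
  unfolding fsel_def using someI_ex[OF fsel_ex] .

lemma fsel_chain: "n \<le> k \<Longrightarrow> hres n k (fsel k) = fsel n"
proof (rule mittag_chain[where h=hres and X=Phi])
  show "\<And>n k l x. n \<le> k \<Longrightarrow> k \<le> l \<Longrightarrow> x \<in> Phi l \<Longrightarrow> hres n k (hres k l x) = hres n l x" by (rule hres_comp)
  show "\<And>n x. x \<in> Phi n \<Longrightarrow> hres n n x = x" by (rule hres_refl)
  show "\<forall>n. fsel n \<in> Phi n \<and> hres n (Suc n) (fsel (Suc n)) = fsel n" by (rule fsel)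
qed

end



context mx begin

interpretation vs: vector_space sc by (rule pmD(1))

definition ntt :: "real \<times> real \<Rightarrow> nat" where "ntt t = nat \<lceil>max (fst t - x') (snd t - y')\<rceil>"

lemma t_le_T: "t \<le> Tn (ntt t)"
proof -
  obtain a b where t: "t = (a, b)" by (cases t)
  have "a - x' \<le> real (ntt t)" "b - y' \<le> real (ntt t)" unfolding ntt_def t by (simp_all, linarith+)
  thus ?thesis unfolding Tn_def t by auto
qed

definition phi :: "real \<times> real \<Rightarrow> 'v \<Rightarrow> 'k" where "phi t m = fsel (ntt t) (F t (Tn (ntt t)) m)"

lemma fselP: "fsel n \<in> Phi n" using fsel by blast

lemma fsel_move: assumes "n \<le> k" "m \<in> V (Tn n)" shows "fsel n m = fsel k (F (Tn n) (Tn k) m)"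
proof -
  have "fsel n m = hres n k (fsel k) m" using fsel_chain[OF assms(1)] by simp
  thus ?thesis unfolding hres_def using assms(2) by simp
qed

lemma phi_any: assumes "t \<in> HP" "t \<le> Tn n" "m \<in> V t" shows "phi t m = fsel n (F t (Tn n) m)"
proof -
  define k where "k = ntt t"
  have tk: "t \<le> Tn k" unfolding k_def by (rule t_le_T)
  have "fsel k (F t (Tn k) m) = fsel n (F t (Tn n) m)"
  proof (cases "n \<le> k")
    case True
    have "fsel n (F t (Tn n) m) = fsel k (F (Tn n) (Tn k) (F t (Tn n) m))"
      using fsel_move[OF True Fin[OF assms(1) Tn_HP assms(2,3)]] .
    also have "\<dots> = fsel k (F t (Tn k) m)" using Fcomp[OF assms(1) Tn_HP Tn_HP assms(2) Tn_mono[OF True] assms(3)] by simp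
    finally show ?thesis by simp
  next
    case False
    hence kn: "k \<le> n" by simp
    have "fsel k (F t (Tn k) m) = fsel n (F (Tn k) (Tn n) (F t (Tn k) m))"
      using fsel_move[OF kn Fin[OF assms(1) Tn_HP tk assms(3)]] .
    also have "\<dots> = fsel n (F t (Tn n) m)" using Fcomp[OF assms(1) Tn_HP Tn_HP tk Tn_mono[OF kn] assms(3)] by simp
    finally show ?thesis .
  qed
  thus ?thesis unfolding phi_def k_def by simp
qed

lemma phi_lin: assumes "t \<in> HP" shows "lin_on sc (*) (V t) (phi t)"
proof -
  define n where "n = ntt t"
  have tn: "t \<le> Tn n" unfolding n_def by (rule t_le_T)
  have fl: "lin_on sc (*) (V (Tn n)) (fsel n)" using fselP[of n] unfolding Phi_def by blast
  have S: "vs.subspace (V t)" using sub[OF assms] .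
  show ?thesis unfolding lin_on_def
  proof (intro conjI ballI allI)
    fix a b assume ab: "a \<in> V t" "b \<in> V t"
    show "phi t (a + b) = phi t a + phi t b"
      unfolding phi_any[OF assms tn ab(1)] phi_any[OF assms tn ab(2)] phi_any[OF assms tn vs.subspace_add[OF S ab]]
        Fadd[OF assms Tn_HP tn ab]
      using fl Fin[OF assms Tn_HP tn ab(1)] Fin[OF assms Tn_HP tn ab(2)] unfolding lin_on_def by blast
  next
    fix c a assume a: "a \<in> V t"
    show "phi t (sc c a) = c * phi t a"
      unfolding phi_any[OF assms tn a] phi_any[OF assms tn vs.subspace_scale[OF S a]] Fscale[OF assms Tn_HP tn a]
      using fl Fin[OF assms Tn_HP tn a] unfolding lin_on_def by blast
  qed
qed

lemma phi_nat: assumes "s \<in> HP" "t \<in> HP" "s \<le> t" "m \<in> V s" shows "phi t (F s t m) = phi s m"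
proof -
  define n where "n = ntt t"
  have tn: "t \<le> Tn n" unfolding n_def by (rule t_le_T)
  have sn: "s \<le> Tn n" using assms(3) tn by (rule order.trans)
  show ?thesis
    unfolding phi_any[OF assms(2) tn Fin[OF assms(1,2,3,4)]] phi_any[OF assms(1) sn assms(4)]
      Fcomp[OF assms(1,2) Tn_HP assms(3) tn assms(4)] ..
qed

lemma phi_out: assumes "s \<in> HP" "s \<notin> J1 \<times> J2" "m \<in> V s" shows "phi s m = 0"
proof -
  define n where "n = ntt s"
  have sn: "s \<le> Tn n" unfolding n_def by (rule t_le_T)
  have "F s (Tn n) m \<in> NT n" using NT_out[OF assms(1) sn assms(2,3)] .
  moreover have "\<forall>m\<in>NT n. fsel n m = 0" using fselP[of n] unfolding Phi_def by blast
  ultimately show ?thesis unfolding phi_any[OF assms(1) sn assms(3)] by blast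
qed

lemma hd: "(x', y') \<in> HP" using HPI sq nondeg by auto

lemma phi_d: "phi (x', y') z0 = 1"
proof -
  have "phi (x', y') z0 = fsel 0 (F (x', y') (Tn 0) z0)" using phi_any[OF hd _ z0_props(3), of 0] Tn0 by simp
  also have "\<dots> = 1" using fselP[of 0] unfolding Phi_def by blast
  finally show ?thesis .
qed

lemma phi_I: assumes "m \<in> I x' y'" shows "phi (x', y') m = 0"
proof -
  obtain u w where uw: "u \<in> V (x, y')" "w \<in> V (x', y)" "m = F (x, y') (x', y') u + F (x', y) (x', y') w"
    using assms unfolding I_def by blast
  have h: "(x, y') \<in> HP" "(x', y) \<in> HP" using HPI sq nondeg by auto
  have le: "(x, y') \<le> (x', y')" "(x', y) \<le> (x', y')" using sq by auto
  have "phi (x', y') m = phi (x', y') (F (x, y') (x', y') u) + phi (x', y') (F (x', y) (x', y') w)"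
    using phi_lin[OF hd] Fin[OF h(1) hd le(1) uw(1)] Fin[OF h(2) hd le(2) uw(2)] unfolding uw(3) lin_on_def by blast
  also have "\<dots> = phi (x, y') u + phi (x', y) w" using phi_nat[OF h(1) hd le(1) uw(1)] phi_nat[OF h(2) hd le(2) uw(2)] by simp
  also have "\<dots> = 0" using phi_out[OF h(1) _ uw(1)] phi_out[OF h(2) _ uw(2)] xJ1 yJ2 by simp
  finally show ?thesis .
qed

lemma phi_KeyB: assumes "p \<in> J1" "q \<in> J2" "p \<le> x'" "q \<le> y'" shows "\<exists>m\<in>V (p, q). phi (p, q) m = 1"
proof -
  obtain m where m: "m \<in> V (p, q)" "z0 - F (p, q) (x', y') m \<in> I x' y'"
    using KeyB[OF assms] unfolding Pre_def by blast
  have hp: "(p, q) \<in> HP" using HPI J1_gt[OF assms(1)] J2_gt[OF assms(2)] by auto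
  have le: "(p, q) \<le> (x', y')" using assms by auto
  have Fm: "F (p, q) (x', y') m \<in> V (x', y')" using Fin[OF hp hd le m(1)] .
  have "phi (x', y') (z0 - F (p, q) (x', y') m) = phi (x', y') z0 - phi (x', y') (F (p, q) (x', y') m)"
  proof -
    have S: "vs.subspace (V (x', y'))" using sub[OF hd] .
    have "phi (x', y') ((z0 - F (p, q) (x', y') m) + F (p, q) (x', y') m) =
          phi (x', y') (z0 - F (p, q) (x', y') m) + phi (x', y') (F (p, q) (x', y') m)"
      using phi_lin[OF hd] vs.subspace_diff[OF S z0_props(3) Fm] Fm unfolding lin_on_def by blast
    thus ?thesis by (simp add: algebra_simps)
  qed
  hence "0 = 1 - phi (p, q) m" using phi_I[OF m(2)] phi_d phi_nat[OF hp hd le m(1)] by simp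
  thus ?thesis using m(1) by auto
qed

end



lemma seq_exists:
  assumes up: "upclosed J" and e: "e \<in> J" and lb: "\<forall>p\<in>J. c < p"
  shows "\<exists>a. (\<forall>n. a n \<in> J \<and> a n \<le> e \<and> a (Suc n) \<le> a n) \<and> (\<forall>p\<in>J. \<exists>n. a n \<le> p)"
proof -
  define \<alpha> where "\<alpha> = Inf J"
  have bdd: "bdd_below J" using lb by (intro bdd_belowI[of _ c]) (simp add: less_imp_le)
  have ne: "J \<noteq> {}" using e by blast
  have al: "\<alpha> \<le> p" if "p \<in> J" for p unfolding \<alpha>_def using cInf_lower[OF that bdd] .
  have gt: "p \<in> J" if "\<alpha> < p" for p
  proof -
    have "Inf J < p" using that unfolding \<alpha>_def .
    then obtain q where q: "q \<in> J" "q < p" using cInf_less_iff[OF ne bdd] by blast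
    have "\<forall>y. q \<le> y \<longrightarrow> y \<in> J" using up q(1) unfolding upclosed_def by blast
    thus ?thesis using q(2) by simp
  qed
  show ?thesis
  proof (cases "\<alpha> \<in> J")
    case True
    show ?thesis
      by (rule exI[of _ "\<lambda>n. \<alpha>"]) (use True al e in auto)
  next
    case False
    have ae: "\<alpha> < e" using al[OF e] False e by (cases "\<alpha> = e") auto
    define a where "a n = \<alpha> + (e - \<alpha>) / real (Suc n)" for n
    have apos: "\<alpha> < a n" for n unfolding a_def using ae by simp
    have "a n \<le> e" for n
    proof -
      have "(e - \<alpha>) / real (Suc n) \<le> (e - \<alpha>)" using ae by (simp add: divide_le_eq)
      thus ?thesis unfolding a_def by simp
    qed
    moreover have "a (Suc n) \<le> a n" for n
    proof -
      have "(e - \<alpha>) / real (Suc (Suc n)) \<le> (e - \<alpha>) / real (Suc n)" using ae by (intro divide_left_mono) auto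
      thus ?thesis unfolding a_def by simp
    qed
    moreover have "\<forall>p\<in>J. \<exists>n. a n \<le> p"
    proof
      fix p assume p: "p \<in> J"
      have pa: "\<alpha> < p" using al[OF p] p False by (cases "\<alpha> = p") auto
      obtain n where n: "inverse (real (Suc n)) < (p - \<alpha>) / (e - \<alpha>)"
        using reals_Archimedean[of "(p - \<alpha>) / (e - \<alpha>)"] pa ae by auto
      have "(e - \<alpha>) * inverse (real (Suc n)) < (e - \<alpha>) * ((p - \<alpha>) / (e - \<alpha>))"
        using n ae by (intro mult_strict_left_mono) auto
      moreover have "(e - \<alpha>) * ((p - \<alpha>) / (e - \<alpha>)) = p - \<alpha>" using ae by simp
      moreover have "(e - \<alpha>) / real (Suc n) = (e - \<alpha>) * inverse (real (Suc n))" by (simp add: divide_inverse)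
      ultimately have "(e - \<alpha>) / real (Suc n) < p - \<alpha>" by simp
      thus "\<exists>n. a n \<le> p" unfolding a_def by (intro exI[of _ n]) simp
    qed
    moreover have "a n \<in> J" for n using gt[OF apos[of n]] .
    ultimately show ?thesis by (intro exI[of _ a]) blast
  qed
qed

lemma antitone_seq: assumes "\<And>n. a (Suc n) \<le> (a n :: real)" shows "n \<le> k \<Longrightarrow> a k \<le> a n"
proof (induction k)
  case 0 thus ?case by simp
next
  case (Suc k)
  show ?case
  proof (cases "n = Suc k")
    case True thus ?thesis by simp
  next
    case False
    hence "n \<le> k" using Suc.prems by simp
    hence "a k \<le> a n" using Suc.IH by simp
    thus ?thesis using assms[of k] by linarith
  qed
qed

context mx begin

interpretation vs: vector_space sc by (rule pmD(1))

definition aseq :: "nat \<Rightarrow> real" where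
  "aseq = (SOME a. (\<forall>n. a n \<in> J1 \<and> a n \<le> x' \<and> a (Suc n) \<le> a n) \<and> (\<forall>p\<in>J1. \<exists>n. a n \<le> p))"
definition bseq :: "nat \<Rightarrow> real" where
  "bseq = (SOME a. (\<forall>n. a n \<in> J2 \<and> a n \<le> y' \<and> a (Suc n) \<le> a n) \<and> (\<forall>p\<in>J2. \<exists>n. a n \<le> p))"

lemma aseq: "\<And>n. aseq n \<in> J1" "\<And>n. aseq n \<le> x'" "\<And>n. aseq (Suc n) \<le> aseq n" "\<And>p. p \<in> J1 \<Longrightarrow> \<exists>n. aseq n \<le> p"
proof -
  have "\<exists>a. (\<forall>n. a n \<in> J1 \<and> a n \<le> x' \<and> a (Suc n) \<le> a n) \<and> (\<forall>p\<in>J1. \<exists>n. a n \<le> p)"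
    using seq_exists[OF J1_up J1_x', of x] J1_gt by blast
  from someI_ex[OF this] show "\<And>n. aseq n \<in> J1" "\<And>n. aseq n \<le> x'" "\<And>n. aseq (Suc n) \<le> aseq n" "\<And>p. p \<in> J1 \<Longrightarrow> \<exists>n. aseq n \<le> p"
    unfolding aseq_def[symmetric] by blast+
qed

lemma bseq: "\<And>n. bseq n \<in> J2" "\<And>n. bseq n \<le> y'" "\<And>n. bseq (Suc n) \<le> bseq n" "\<And>p. p \<in> J2 \<Longrightarrow> \<exists>n. bseq n \<le> p"
proof -
  have "\<exists>a. (\<forall>n. a n \<in> J2 \<and> a n \<le> y' \<and> a (Suc n) \<le> a n) \<and> (\<forall>p\<in>J2. \<exists>n. a n \<le> p)"
    using seq_exists[OF J2_up J2_y', of y] J2_gt by blast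
  from someI_ex[OF this] show "\<And>n. bseq n \<in> J2" "\<And>n. bseq n \<le> y'" "\<And>n. bseq (Suc n) \<le> bseq n" "\<And>p. p \<in> J2 \<Longrightarrow> \<exists>n. bseq n \<le> p"
    unfolding bseq_def[symmetric] by blast+
qed

definition Sn :: "nat \<Rightarrow> real \<times> real" where "Sn n = (aseq n, bseq n)"

lemma Sn_HP: "Sn n \<in> HP" unfolding Sn_def using HPI[of "aseq n" "bseq n"] J1_gt[OF aseq(1)[of n]] J2_gt[OF bseq(1)[of n]] by auto
lemma Sn_B: "Sn n \<in> J1 \<times> J2" unfolding Sn_def using aseq(1) bseq(1) by auto
lemma Sn_mono: "n \<le> k \<Longrightarrow> Sn k \<le> Sn n"
  unfolding Sn_def using antitone_seq[of aseq n k] antitone_seq[of bseq n k] aseq(3) bseq(3) by auto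
lemma Sn_cof: assumes "t \<in> J1 \<times> J2" shows "\<exists>n. Sn n \<le> t"
proof -
  obtain a b where t: "t = (a, b)" "a \<in> J1" "b \<in> J2" using assms by auto
  obtain n1 n2 where "aseq n1 \<le> a" "bseq n2 \<le> b" using aseq(4)[OF t(2)] bseq(4)[OF t(3)] by blast
  hence "aseq (max n1 n2) \<le> a" "bseq (max n1 n2) \<le> b"
    using antitone_seq[of aseq n1 "max n1 n2"] antitone_seq[of bseq n2 "max n1 n2"] aseq(3) bseq(3) by auto
  thus ?thesis unfolding t Sn_def by auto
qed

definition Xs :: "nat \<Rightarrow> 'v set" where "Xs n = {m \<in> V (Sn n). phi (Sn n) m = 1}"
definition hs :: "nat \<Rightarrow> nat \<Rightarrow> 'v \<Rightarrow> 'v" where "hs n k m = F (Sn k) (Sn n) m"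

lemma hs_maps: assumes "n \<le> k" "m \<in> Xs k" shows "hs n k m \<in> Xs n"
  using assms Fin[OF Sn_HP Sn_HP Sn_mono[OF assms(1)]] phi_nat[OF Sn_HP Sn_HP Sn_mono[OF assms(1)]]
  unfolding Xs_def hs_def by auto

lemma hs_comp: assumes "n \<le> k" "k \<le> l" "m \<in> Xs l" shows "hs n k (hs k l m) = hs n l m"
  using Fcomp[OF Sn_HP Sn_HP Sn_HP Sn_mono[OF assms(2)] Sn_mono[OF assms(1)]] assms(3) unfolding Xs_def hs_def by auto

lemma hs_refl: "m \<in> Xs n \<Longrightarrow> hs n n m = m" unfolding Xs_def hs_def using Fid[OF Sn_HP] by auto

lemma Xs_ne: "Xs n \<noteq> {}"
  using phi_KeyB[OF aseq(1) bseq(1) aseq(2) bseq(2), of n n] unfolding Xs_def Sn_def by blast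

definition Im :: "nat \<Rightarrow> nat \<Rightarrow> 'v set" where "Im n k = F (Sn k) (Sn n) ` V (Sn k)"

lemma Im_sub: assumes "n \<le> k" shows "vs.subspace (Im n k)" "Im n k \<subseteq> V (Sn n)"
proof -
  have le: "Sn k \<le> Sn n" using Sn_mono[OF assms] .
  have S: "vs.subspace (V (Sn k))" using sub[OF Sn_HP] .
  show "Im n k \<subseteq> V (Sn n)" unfolding Im_def using Fin[OF Sn_HP Sn_HP le] by blast
  show "vs.subspace (Im n k)"
  proof (rule vs.subspaceI)
    show "0 \<in> Im n k" unfolding Im_def using F0[OF Sn_HP Sn_HP le] vs.subspace_0[OF S] by (metis image_eqI)
  next
    fix a b assume "a \<in> Im n k" "b \<in> Im n k"
    then obtain a' b' where ab: "a' \<in> V (Sn k)" "b' \<in> V (Sn k)" "a = F (Sn k) (Sn n) a'" "b = F (Sn k) (Sn n) b'"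
      unfolding Im_def by blast
    have "a + b = F (Sn k) (Sn n) (a' + b')" using Fadd[OF Sn_HP Sn_HP le ab(1,2)] ab(3,4) by simp
    thus "a + b \<in> Im n k" unfolding Im_def using vs.subspace_add[OF S ab(1,2)] by blast
  next
    fix c a assume "a \<in> Im n k"
    then obtain a' where a: "a' \<in> V (Sn k)" "a = F (Sn k) (Sn n) a'" unfolding Im_def by blast
    have "sc c a = F (Sn k) (Sn n) (sc c a')" using Fscale[OF Sn_HP Sn_HP le a(1)] a(2) by simp
    thus "sc c a \<in> Im n k" unfolding Im_def using vs.subspace_scale[OF S a(1)] by blast
  qed
qed

lemma Im_mono: assumes "n \<le> k" "k \<le> k'" shows "Im n k' \<subseteq> Im n k"
proof
  fix m assume "m \<in> Im n k'"
  then obtain m' where m: "m' \<in> V (Sn k')" "m = F (Sn k') (Sn n) m'" unfolding Im_def by blast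
  have "m = F (Sn k) (Sn n) (F (Sn k') (Sn k) m')"
    using Fcomp[OF Sn_HP Sn_HP Sn_HP Sn_mono[OF assms(2)] Sn_mono[OF assms(1)] m(1)] m(2) by simp
  thus "m \<in> Im n k" unfolding Im_def using Fin[OF Sn_HP Sn_HP Sn_mono[OF assms(2)] m(1)] by blast
qed

lemma hs_img: assumes "n \<le> k" shows "hs n k ` Xs k = {m \<in> Im n k. phi (Sn n) m = 1}"
proof
  have le: "Sn k \<le> Sn n" using Sn_mono[OF assms] .
  show "hs n k ` Xs k \<subseteq> {m \<in> Im n k. phi (Sn n) m = 1}"
    using phi_nat[OF Sn_HP Sn_HP le] unfolding hs_def Xs_def Im_def by auto
  show "{m \<in> Im n k. phi (Sn n) m = 1} \<subseteq> hs n k ` Xs k"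
  proof
    fix m assume "m \<in> {m \<in> Im n k. phi (Sn n) m = 1}"
    then obtain m' where m: "m' \<in> V (Sn k)" "m = F (Sn k) (Sn n) m'" "phi (Sn n) m = 1" unfolding Im_def by blast
    have "phi (Sn k) m' = 1" using phi_nat[OF Sn_HP Sn_HP le m(1)] m(2,3) by simp
    thus "m \<in> hs n k ` Xs k" unfolding hs_def Xs_def using m(1,2) by blast
  qed
qed

lemma hs_stab: "\<exists>k0\<ge>n. \<forall>k\<ge>k0. hs n k ` Xs k = hs n k0 ` Xs k0"
proof -
  obtain W where W: "finite W" "vs.span W = V (Sn n)" using findim[OF Sn_HP] by blast
  obtain k0 where k0: "k0 \<ge> n" "\<forall>k. k \<ge> n \<longrightarrow> vs.dim (Im n k0) \<le> vs.dim (Im n k)"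
    using ex_has_least_nat[of "\<lambda>k. k \<ge> n" n "\<lambda>k. vs.dim (Im n k)"] by blast
  have Ieq: "Im n k = Im n k0" if "k \<ge> k0" for k
  proof -
    have s1: "Im n k \<subseteq> Im n k0" using Im_mono[OF k0(1) that] .
    have "Im n k0 \<subseteq> vs.span W" using Im_sub(2)[OF k0(1)] W(2) by simp
    thus ?thesis using vs.dim_eq_sub[OF Im_sub(1)[of n k] Im_sub(1)[OF k0(1)] s1 _ W(1)] k0 that by simp
  qed
  have "\<forall>k\<ge>k0. hs n k ` Xs k = hs n k0 ` Xs k0"
  proof (intro allI impI)
    fix k assume k: "k \<ge> k0"
    have "hs n k ` Xs k = {m \<in> Im n k. phi (Sn n) m = 1}" using hs_img[of n k] k k0(1) by simp
    also have "\<dots> = {m \<in> Im n k0. phi (Sn n) m = 1}" unfolding Ieq[OF k] ..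
    also have "\<dots> = hs n k0 ` Xs k0" using hs_img[of n k0] k0(1) by simp
    finally show "hs n k ` Xs k = hs n k0 ` Xs k0" .
  qed
  thus ?thesis using k0(1) by blast
qed

lemma vsel_ex: "\<exists>sel. \<forall>n. sel n \<in> Xs n \<and> hs n (Suc n) (sel (Suc n)) = sel n"
proof (rule mittag_thread[where h=hs and X=Xs])
  show "\<And>n k x. n \<le> k \<Longrightarrow> x \<in> Xs k \<Longrightarrow> hs n k x \<in> Xs n" by (rule hs_maps)
  show "\<And>n k l x. n \<le> k \<Longrightarrow> k \<le> l \<Longrightarrow> x \<in> Xs l \<Longrightarrow> hs n k (hs k l x) = hs n l x" by (rule hs_comp)
  show "\<And>n. Xs n \<noteq> {}" by (rule Xs_ne)
  show "\<And>n. \<exists>k0\<ge>n. \<forall>k\<ge>k0. hs n k ` Xs k = hs n k0 ` Xs k0" by (rule hs_stab)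
qed

definition vsel :: "nat \<Rightarrow> 'v" where
  "vsel = (SOME sel. \<forall>n. sel n \<in> Xs n \<and> hs n (Suc n) (sel (Suc n)) = sel n)"

lemma vsel: "\<forall>n. vsel n \<in> Xs n \<and> hs n (Suc n) (vsel (Suc n)) = vsel n"
  unfolding vsel_def using someI_ex[OF vsel_ex] .

lemma vsel_chain: "n \<le> k \<Longrightarrow> hs n k (vsel k) = vsel n"
proof (rule mittag_chain[where h=hs and X=Xs])
  show "\<And>n k l x. n \<le> k \<Longrightarrow> k \<le> l \<Longrightarrow> x \<in> Xs l \<Longrightarrow> hs n k (hs k l x) = hs n l x" by (rule hs_comp)
  show "\<And>n x. x \<in> Xs n \<Longrightarrow> hs n n x = x" by (rule hs_refl)
  show "\<forall>n. vsel n \<in> Xs n \<and> hs n (Suc n) (vsel (Suc n)) = vsel n" by (rule vsel)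
qed

end



context mx begin

interpretation vs: vector_space sc by (rule pmD(1))

abbreviation B :: "(real \<times> real) set" where "B \<equiv> J1 \<times> J2"

lemma B_HP: "t \<in> B \<Longrightarrow> t \<in> HP" using HPI J1_gt J2_gt by (cases t) force

lemma B_up: "s \<in> B \<Longrightarrow> s \<le> t \<Longrightarrow> t \<in> B"
  using J1_up J2_up unfolding upclosed_def by (cases s, cases t) auto

lemma vsel_props: "vsel n \<in> V (Sn n)" "phi (Sn n) (vsel n) = 1" using vsel unfolding Xs_def by auto

definition nts :: "real \<times> real \<Rightarrow> nat" where "nts t = (SOME n. Sn n \<le> t)"
definition vt :: "real \<times> real \<Rightarrow> 'v" where "vt t = F (Sn (nts t)) t (vsel (nts t))"

lemma nts: assumes "t \<in> B" shows "Sn (nts t) \<le> t"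
proof -
  have "\<exists>n. Sn n \<le> t" using Sn_cof[OF assms] .
  from someI_ex[OF this] show ?thesis unfolding nts_def .
qed

lemma v_move: assumes "t \<in> HP" "Sn n \<le> t" "n \<le> K" shows "F (Sn n) t (vsel n) = F (Sn K) t (vsel K)"
proof -
  have "vsel n = F (Sn K) (Sn n) (vsel K)" using vsel_chain[OF assms(3)] unfolding hs_def by simp
  thus ?thesis using Fcomp[OF Sn_HP Sn_HP assms(1) Sn_mono[OF assms(3)] assms(2) vsel_props(1)] by simp
qed

lemma v_any: assumes "t \<in> B" "Sn n \<le> t" shows "vt t = F (Sn n) t (vsel n)"
proof -
  define k where "k = nts t"
  define K where "K = max n k"
  have t: "t \<in> HP" using B_HP[OF assms(1)] .
  have kt: "Sn k \<le> t" unfolding k_def using nts[OF assms(1)] .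
  have "vt t = F (Sn k) t (vsel k)" unfolding vt_def k_def ..
  also have "\<dots> = F (Sn K) t (vsel K)" using v_move[OF t kt, of K] unfolding K_def by simp
  also have "\<dots> = F (Sn n) t (vsel n)" using v_move[OF t assms(2), of K] unfolding K_def by simp
  finally show ?thesis .
qed

lemma vt_props: assumes "t \<in> B" shows "vt t \<in> V t" "phi t (vt t) = 1"
proof -
  have t: "t \<in> HP" using B_HP[OF assms] .
  have k: "Sn (nts t) \<le> t" using nts[OF assms] .
  show "vt t \<in> V t" unfolding vt_def using Fin[OF Sn_HP t k vsel_props(1)] .
  show "phi t (vt t) = 1" unfolding vt_def using phi_nat[OF Sn_HP t k vsel_props(1)] vsel_props(2) by simp
qed

lemma vt_nat: assumes "s \<in> B" "s \<le> t" shows "F s t (vt s) = vt t"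
proof -
  have t: "t \<in> B" using B_up[OF assms] .
  have hs: "s \<in> HP" "t \<in> HP" using B_HP assms(1) t by auto
  have k: "Sn (nts s) \<le> s" using nts[OF assms(1)] .
  have "F s t (vt s) = F (Sn (nts s)) t (vsel (nts s))"
    unfolding vt_def using Fcomp[OF Sn_HP hs(1) hs(2) k assms(2) vsel_props(1)] .
  also have "\<dots> = vt t" using v_any[OF t order.trans[OF k assms(2)]] by simp
  finally show ?thesis .
qed

lemma phi0: "t \<in> HP \<Longrightarrow> phi t 0 = 0"
proof -
  assume t: "t \<in> HP"
  have "phi t (sc 0 0) = 0 * phi t 0" using phi_lin[OF t] vs.subspace_0[OF sub[OF t]] unfolding lin_on_def by blast
  thus ?thesis by simp
qed

lemma main:
  assumes ind: "indecomposable sc HP V F"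
  shows "\<exists>J. block_bb J \<and> pmod_iso sc HP V F (*) (kB_space (J \<inter> HP)) (kB_map (J \<inter> HP))"
proof -
  define U where "U t = (if t \<in> B then {sc c (vt t) | c. True} else {0})" for t
  define W where "W t = (if t \<in> B then {m \<in> V t. phi t m = 0} else V t)" for t
  have hyp1: "\<forall>t\<in>HP. vs.subspace (U t) \<and> vs.subspace (W t) \<and> U t \<inter> W t = {0} \<and> {u + w | u w. u \<in> U t \<and> w \<in> W t} = V t"
  proof
    fix t assume t: "t \<in> HP"
    note S = sub[OF t]
    show "vs.subspace (U t) \<and> vs.subspace (W t) \<and> U t \<inter> W t = {0} \<and> {u + w | u w. u \<in> U t \<and> w \<in> W t} = V t"
    proof (cases "t \<in> B")
      case True
      note vp = vt_props[OF True]
      have lin: "lin_on sc (*) (V t) (phi t)" using phi_lin[OF t] .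
      have pa: "phi t (a + b) = phi t a + phi t b" if "a \<in> V t" "b \<in> V t" for a b using lin that unfolding lin_on_def by blast
      have ps: "phi t (sc c a) = c * phi t a" if "a \<in> V t" for a c using lin that unfolding lin_on_def by blast
      have Ueq: "U t = {sc c (vt t) | c. True}" unfolding U_def using True by simp
      have Weq: "W t = {m \<in> V t. phi t m = 0}" unfolding W_def using True by simp
      have sU: "vs.subspace (U t)" unfolding Ueq
      proof (rule vs.subspaceI)
        show "0 \<in> {sc c (vt t) | c. True}" by (rule CollectI, rule exI[of _ 0]) simp
      next
        fix a b assume "a \<in> {sc c (vt t) | c. True}" "b \<in> {sc c (vt t) | c. True}"
        then obtain c c' where "a = sc c (vt t)" "b = sc c' (vt t)" by blast
        hence "a + b = sc (c + c') (vt t)" by (simp add: vs.scale_left_distrib)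
        thus "a + b \<in> {sc c (vt t) | c. True}" by blast
      next
        fix c' a assume "a \<in> {sc c (vt t) | c. True}"
        then obtain c where "a = sc c (vt t)" by blast
        hence "sc c' a = sc (c' * c) (vt t)" by simp
        thus "sc c' a \<in> {sc c (vt t) | c. True}" by blast
      qed
      have sW: "vs.subspace (W t)" unfolding Weq
      proof (rule vs.subspaceI)
        show "0 \<in> {m \<in> V t. phi t m = 0}" using vs.subspace_0[OF S] phi0[OF t] by simp
      next
        fix a b assume "a \<in> {m \<in> V t. phi t m = 0}" "b \<in> {m \<in> V t. phi t m = 0}"
        thus "a + b \<in> {m \<in> V t. phi t m = 0}" using vs.subspace_add[OF S] pa by simp
      next
        fix c a assume "a \<in> {m \<in> V t. phi t m = 0}"
        thus "sc c a \<in> {m \<in> V t. phi t m = 0}" using vs.subspace_scale[OF S] ps by simp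
      qed
      have int: "U t \<inter> W t = {0}"
      proof
        show "U t \<inter> W t \<subseteq> {0}"
        proof
          fix a assume "a \<in> U t \<inter> W t"
          then obtain c where c: "a = sc c (vt t)" "phi t a = 0" unfolding Ueq Weq by blast
          have "phi t a = c" using ps[OF vp(1)] vp(2) c(1) by simp
          thus "a \<in> {0}" using c by simp
        qed
        show "{0} \<subseteq> U t \<inter> W t" using vs.subspace_0[OF sU] vs.subspace_0[OF sW] by simp
      qed
      have sum: "{u + w | u w. u \<in> U t \<and> w \<in> W t} = V t"
      proof
        show "{u + w | u w. u \<in> U t \<and> w \<in> W t} \<subseteq> V t"
        proof
          fix a assume "a \<in> {u + w | u w. u \<in> U t \<and> w \<in> W t}"
          then obtain u w where uw: "a = u + w" "u \<in> U t" "w \<in> W t" by blast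
          have "u \<in> V t" using uw(2) vs.subspace_scale[OF S vp(1)] unfolding Ueq by blast
          moreover have "w \<in> V t" using uw(3) unfolding Weq by blast
          ultimately show "a \<in> V t" using vs.subspace_add[OF S] uw(1) by simp
        qed
        show "V t \<subseteq> {u + w | u w. u \<in> U t \<and> w \<in> W t}"
        proof
          fix m assume m: "m \<in> V t"
          define u where "u = sc (phi t m) (vt t)"
          have uV: "u \<in> V t" unfolding u_def using vs.subspace_scale[OF S vp(1)] .
          have "phi t u = phi t m" unfolding u_def using ps[OF vp(1)] vp(2) by simp
          moreover have "phi t ((m - u) + u) = phi t (m - u) + phi t u" using pa[OF vs.subspace_diff[OF S m uV] uV] .
          ultimately have "phi t (m - u) = 0" by simp
          hence "m - u \<in> W t" unfolding Weq using vs.subspace_diff[OF S m uV] by simp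
          moreover have "u \<in> U t" unfolding Ueq u_def by blast
          moreover have "m = u + (m - u)" by simp
          ultimately show "m \<in> {u + w | u w. u \<in> U t \<and> w \<in> W t}" by blast
        qed
      qed
      show ?thesis using sU sW int sum by blast
    next
      case False
      have Ueq: "U t = {0}" "W t = V t" unfolding U_def W_def using False by auto
      have "{u + w | u w. u \<in> U t \<and> w \<in> W t} = V t" unfolding Ueq by auto
      moreover have "U t \<inter> W t = {0}" unfolding Ueq using vs.subspace_0[OF S] by auto
      ultimately show ?thesis unfolding Ueq using S by simp
    qed
  qed
  have hyp2: "\<forall>s\<in>HP. \<forall>t\<in>HP. s \<le> t \<longrightarrow> (\<forall>a\<in>U s. F s t a \<in> U t) \<and> (\<forall>a\<in>W s. F s t a \<in> W t)"
  proof (intro ballI impI conjI)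
    fix s t a assume st: "s \<in> HP" "t \<in> HP" "s \<le> t" and a: "a \<in> U s"
    show "F s t a \<in> U t"
    proof (cases "s \<in> B")
      case True
      have tB: "t \<in> B" using B_up[OF True st(3)] .
      obtain c where c: "a = sc c (vt s)" using a True unfolding U_def by auto
      have "F s t a = sc c (vt t)" using Fscale[OF st vt_props(1)[OF True]] vt_nat[OF True st(3)] c by simp
      thus ?thesis unfolding U_def using tB by auto
    next
      case False
      hence "a = 0" using a unfolding U_def by simp
      hence "F s t a = 0" using F0[OF st] by simp
      moreover have "0 \<in> U t" unfolding U_def by (auto intro: exI[of _ 0])
      ultimately show ?thesis by simp
    qed
  next
    fix s t a assume st: "s \<in> HP" "t \<in> HP" "s \<le> t" and a: "a \<in> W s"
    have aV: "a \<in> V s" using a unfolding W_def by (cases "s \<in> B") auto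
    have FV: "F s t a \<in> V t" using Fin[OF st aV] .
    show "F s t a \<in> W t"
    proof (cases "t \<in> B")
      case False thus ?thesis unfolding W_def using FV by simp
    next
      case True
      have "phi t (F s t a) = phi s a" using phi_nat[OF st aV] .
      moreover have "phi s a = 0"
      proof (cases "s \<in> B")
        case True thus ?thesis using a unfolding W_def by simp
      next
        case False thus ?thesis using phi_out[OF st(1) False aV] by simp
      qed
      ultimately show ?thesis unfolding W_def using True FV by simp
    qed
  qed
  have dB: "(x', y') \<in> B" using J1_x' J2_y' by simp
  have "U (x', y') \<noteq> {0}"
  proof
    assume "U (x', y') = {0}"
    moreover have "vt (x', y') \<in> U (x', y')" unfolding U_def using dB by (auto intro: exI[of _ 1])
    ultimately have "vt (x', y') = 0" by simp
    thus False using vt_props(2)[OF dB] phi0[OF hd] by simp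
  qed
  hence W0: "\<forall>t\<in>HP. W t = {0}" using ind hyp1 hyp2 hd unfolding indecomposable_def by blast
  define th where "th t m = (if t \<in> B then phi t m else 0)" for t m
  have BH: "B \<inter> HP = B" using B_HP by blast
  have "pmod_iso sc HP V F (*) (kB_space B) (kB_map B)"
    unfolding pmod_iso_def
  proof (intro exI[of _ th] conjI ballI impI)
    fix t assume t: "t \<in> HP"
    show "lin_on sc (*) (V t) (th t)"
      using phi_lin[OF t] unfolding th_def lin_on_def by (cases "t \<in> B") auto
    show "bij_betw (th t) (V t) (kB_space B t)"
    proof (cases "t \<in> B")
      case True
      have ks: "kB_space B t = (UNIV :: 'k set)" unfolding kB_space_def using True by simp
      have thp: "th t = phi t" unfolding th_def using True by (intro ext) simp
      have lin: "lin_on sc (*) (V t) (phi t)" using phi_lin[OF t] .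
      note S = sub[OF t]
      show ?thesis unfolding ks thp bij_betw_def
      proof
        show "inj_on (phi t) (V t)"
        proof (rule inj_onI)
          fix a b assume ab: "a \<in> V t" "b \<in> V t" "phi t a = phi t b"
          have "phi t ((a - b) + b) = phi t (a - b) + phi t b" using lin vs.subspace_diff[OF S ab(1,2)] ab(2)
            unfolding lin_on_def by blast
          hence "phi t (a - b) = 0" using ab(3) by simp
          hence "a - b \<in> W t" unfolding W_def using True vs.subspace_diff[OF S ab(1,2)] by simp
          thus "a = b" using W0 t by simp
        qed
        have "UNIV \<subseteq> phi t ` V t"
        proof
          fix c :: 'k
          have "phi t (sc c (vt t)) = c" using lin vt_props[OF True] unfolding lin_on_def by simp
          thus "c \<in> phi t ` V t" using vs.subspace_scale[OF S vt_props(1)[OF True]] by (metis image_eqI)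
        qed
        thus "phi t ` V t = UNIV" by blast
      qed
    next
      case False
      have ks: "kB_space B t = ({0} :: 'k set)" unfolding kB_space_def using False by simp
      have "V t = {0}" using W0 t False unfolding W_def by auto
      thus ?thesis unfolding ks bij_betw_def th_def using False by simp
    qed
  next
    fix s t a assume st: "s \<in> HP" "t \<in> HP" "s \<le> t" and a: "a \<in> V s"
    show "th t (F s t a) = kB_map B s t (th s a)"
    proof (cases "s \<in> B")
      case True
      have "t \<in> B" using B_up[OF True st(3)] .
      thus ?thesis unfolding th_def kB_map_def using True phi_nat[OF st a] by simp
    next
      case False
      thus ?thesis unfolding th_def kB_map_def using phi_nat[OF st a] phi_out[OF st(1) False a] by simp
    qed
  qed
  moreover have "block_bb B" unfolding block_bb_def using J1_x' J2_y' J1_up J2_up by blast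
  ultimately show ?thesis using BH by metis
qed

end

theorem lemma5p12:
  fixes sc :: "'k::field \<Rightarrow> 'v::ab_group_add \<Rightarrow> 'v"
    and V :: "real \<times> real \<Rightarrow> 'v set"
    and F :: "real \<times> real \<Rightarrow> real \<times> real \<Rightarrow> 'v \<Rightarrow> 'v"
    and T :: "(real \<times> real) set"
  defines "T \<equiv> {p. fst p + snd p > 0}"
  assumes "pmod sc T V F"
    and "pfd sc T V"
    and "middle_exact T V F"
    and "indecomposable sc T V F"
    and "\<exists>x x' y y'. x \<le> x' \<and> y \<le> y' \<and>
           (x, y) \<in> T \<and> (x, y') \<in> T \<and> (x', y) \<in> T \<and> (x', y') \<in> T \<and>
           \<not> (\<forall>z\<in>V (x', y'). \<exists>u\<in>V (x, y'). \<exists>w\<in>V (x', y).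
                  z = F (x, y') (x', y') u - F (x', y) (x', y') w)"
  shows "\<exists>J. block_bb J \<and>
           pmod_iso sc T V F (*) (kB_space (J \<inter> T)) (kB_map (J \<inter> T))"
proof -
  have TH: "T = HP" unfolding T_def HP_def ..
  obtain x x' y y' where xy: "x \<le> x'" "y \<le> y'" "(x, y) \<in> T"
    and nsurj: "\<not> (\<forall>z\<in>V (x', y'). \<exists>u\<in>V (x, y'). \<exists>w\<in>V (x', y).
                  z = F (x, y') (x', y') u - F (x', y) (x', y') w)"
    using assms(6) by blast
  obtain z where z: "z \<in> V (x', y')" "\<not> (\<exists>u\<in>V (x, y'). \<exists>w\<in>V (x', y). z = F (x, y') (x', y') u - F (x', y) (x', y') w)"
    using nsurj by blast
  have xy0: "x + y > 0" using xy(3) unfolding T_def by simp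
  interpret M: mx sc V F x x' y y' z
    by (unfold_locales) (use assms(2-4) xy xy0 z in \<open>simp_all add: TH\<close>)
  show ?thesis using M.main assms(5) unfolding TH by blast
qed

end
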